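(* Let $F$ be a complete discretely valued field with residue field $\kappa$ and let $p$ be a prime with $p\neq\mathrm{char}(\kappa)$. Let $L_1/F$ be an unramified cyclic extension of degree $p$ and $L_2/F$ a ramified cyclic extension of degree $p$, and let $L=L_1\times L_2$. Then $T_{L/F}(F)/R=\{1\}$.
   Context: The multinorm torus $T_{L/F}$ is the kernel of $R_{L_1/F}\mathbb{G}_m\times R_{L_2/F}\mathbb{G}_m\to\mathbb{G}_m$, $(x_1,x_2)\mapsto N_{L_1/F}(x_1)N_{L_2/F}(x_2)$. For a torus $T$ over $F$, $T(F)/R$ is the quotient of $T(F)$ by the subgroup of elements $R$-equivalent to the identity, $R$-equivalence being generated by: $x_0\sim x_1$ if some $F$-rational map $f:\mathbb{P}^1\dashrightarrow T$ satisfies $f(0)=x_0$, $f(1)=x_1$. *)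

theory Defs
  imports "HOL-Computational_Algebra.Polynomial"
begin

text \<open>A normalized discrete valuation on a field: v is only meaningful on nonzero
  elements (v 0 is irrelevant, i.e. v 0 = infinity by convention), v is a homomorphism
  from the multiplicative group onto the integers, and satisfies the ultrametric inequality.\<close>
definition discrete_valuation :: "('a::field \<Rightarrow> int) \<Rightarrow> bool" where
  "discrete_valuation v \<longleftrightarrow>
     (\<forall>x y. x \<noteq> 0 \<longrightarrow> y \<noteq> 0 \<longrightarrow> v (x * y) = v x + v y) \<and>
     (\<forall>x y. x \<noteq> 0 \<longrightarrow> y \<noteq> 0 \<longrightarrow> x + y \<noteq> 0 \<longrightarrow> min (v x) (v y) \<le> v (x + y)) \<and>
     (\<forall>n. \<exists>x. x \<noteq> 0 \<and> v x = n)"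

text \<open>Completeness with respect to the valuation topology (every Cauchy sequence converges).
  "x = y or v(x - y) >= n" means |x - y| <= 2^(-n).\<close>
definition complete_wrt :: "('a::field \<Rightarrow> int) \<Rightarrow> bool" where
  "complete_wrt v \<longleftrightarrow>
     (\<forall>X :: nat \<Rightarrow> 'a.
        (\<forall>n::int. \<exists>N. \<forall>m\<ge>N. \<forall>k\<ge>N. X m = X k \<or> n \<le> v (X m - X k)) \<longrightarrow>
        (\<exists>l. \<forall>n::int. \<exists>N. \<forall>m\<ge>N. X m = l \<or> n \<le> v (X m - l)))"

definition val_ring :: "('a::field \<Rightarrow> int) \<Rightarrow> 'a set" where
  "val_ring v = {x. x = 0 \<or> 0 \<le> v x}"

definition max_ideal :: "('a::field \<Rightarrow> int) \<Rightarrow> 'a set" where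
  "max_ideal v = {x. x = 0 \<or> 0 < v x}"

text \<open>For a prime p: char(residue field) = p iff the image of p*1 in
  residue field = val_ring / max_ideal is zero, i.e. p*1 lies in the maximal ideal.\<close>
definition residue_char_neq :: "('a::field \<Rightarrow> int) \<Rightarrow> nat \<Rightarrow> bool" where
  "residue_char_neq v p \<longleftrightarrow> (of_nat p :: 'a) \<notin> max_ideal v"

definition field_emb :: "('a::field \<Rightarrow> 'b::field) \<Rightarrow> bool" where
  "field_emb i \<longleftrightarrow> i 1 = 1 \<and> (\<forall>x y. i (x + y) = i x + i y) \<and> (\<forall>x y. i (x * y) = i x * i y)"

definition Gal :: "('a::field \<Rightarrow> 'b::field) \<Rightarrow> ('b \<Rightarrow> 'b) set" where
  "Gal i = {\<sigma>. bij \<sigma> \<and> (\<forall>x y. \<sigma> (x + y) = \<sigma> x + \<sigma> y \<and> \<sigma> (x * y) = \<sigma> x * \<sigma> y)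
                 \<and> (\<forall>a. \<sigma> (i a) = i a)}"

text \<open>[L:F] = n: L has an F-basis b 0, ..., b (n-1).\<close>
definition ext_degree_eq :: "('a::field \<Rightarrow> 'b::field) \<Rightarrow> nat \<Rightarrow> bool" where
  "ext_degree_eq i n \<longleftrightarrow>
     (\<exists>b :: nat \<Rightarrow> 'b. \<forall>y. \<exists>!c :: nat \<Rightarrow> 'a. (\<forall>k\<ge>n. c k = 0) \<and> y = (\<Sum>k<n. i (c k) * b k))"

definition cyclic_ext :: "('a::field \<Rightarrow> 'b::field) \<Rightarrow> nat \<Rightarrow> bool" where
  "cyclic_ext i n \<longleftrightarrow> field_emb i \<and> ext_degree_eq i n \<and> card (Gal i) = n \<and>
     (\<exists>\<sigma>\<in>Gal i. Gal i = range (\<lambda>k. \<sigma> ^^ k))"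

text \<open>Unramified: the (normalized) extension w of v to L has ramification index 1.\<close>
definition unramified_ext :: "('a::field \<Rightarrow> int) \<Rightarrow> ('a \<Rightarrow> 'b::field) \<Rightarrow> bool" where
  "unramified_ext v i \<longleftrightarrow>
     (\<exists>w :: 'b \<Rightarrow> int. discrete_valuation w \<and> (\<forall>a. a \<noteq> 0 \<longrightarrow> w (i a) = v a))"

text \<open>Ramified: the (normalized) extension w of v to L has ramification index e > 1.\<close>
definition ramified_ext :: "('a::field \<Rightarrow> int) \<Rightarrow> ('a \<Rightarrow> 'b::field) \<Rightarrow> bool" where
  "ramified_ext v i \<longleftrightarrow>
     (\<exists>(w :: 'b \<Rightarrow> int) (e::int). discrete_valuation w \<and> e > 1 \<and>
        (\<forall>a. a \<noteq> 0 \<longrightarrow> w (i a) = e * v a))"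

definition ext_norm :: "('a::field \<Rightarrow> 'b::field) \<Rightarrow> 'b \<Rightarrow> 'a" where
  "ext_norm i x = (THE a. i a = (\<Prod>\<sigma>\<in>Gal i. \<sigma> x))"

text \<open>Norm from L[t] to F[t] (coefficientwise Galois action), used for the norm
  L(t) -> F(t) of rational functions g/h.\<close>
definition poly_norm :: "('a::field \<Rightarrow> 'b::field) \<Rightarrow> 'b poly \<Rightarrow> 'a poly" where
  "poly_norm i g = (THE P. map_poly i P = (\<Prod>\<sigma>\<in>Gal i. map_poly \<sigma> g))"

definition multinorm_torus :: "('a::field \<Rightarrow> 'b::field) \<Rightarrow> ('a \<Rightarrow> 'c::field) \<Rightarrow> ('b \<times> 'c) set" where
  "multinorm_torus i1 i2 = {(x1, x2). x1 \<noteq> 0 \<and> x2 \<noteq> 0 \<and> ext_norm i1 x1 * ext_norm i2 x2 = 1}"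

text \<open>Elementary R-link: an F-rational map f : P^1 --> T, i.e. a point of
  T(F(t)) = pairs (g1/h1, g2/h2) in L1(t)^* x L2(t)^* with N(g1/h1) N(g2/h2) = 1,
  which is regular (and invertible) at t = 0 and t = 1, with f(0) = x and f(1) = y.\<close>
definition R_link :: "('a::field \<Rightarrow> 'b::field) \<Rightarrow> ('a \<Rightarrow> 'c::field) \<Rightarrow> ('b \<times> 'c) \<Rightarrow> ('b \<times> 'c) \<Rightarrow> bool" where
  "R_link i1 i2 x y \<longleftrightarrow>
     (\<exists>(g1 :: 'b poly) (h1 :: 'b poly) (g2 :: 'c poly) (h2 :: 'c poly).
        poly g1 0 \<noteq> 0 \<and> poly h1 0 \<noteq> 0 \<and> poly g2 0 \<noteq> 0 \<and> poly h2 0 \<noteq> 0 \<and>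
        poly g1 1 \<noteq> 0 \<and> poly h1 1 \<noteq> 0 \<and> poly g2 1 \<noteq> 0 \<and> poly h2 1 \<noteq> 0 \<and>
        poly_norm i1 g1 * poly_norm i2 g2 = poly_norm i1 h1 * poly_norm i2 h2 \<and>
        x = (poly g1 0 / poly h1 0, poly g2 0 / poly h2 0) \<and>
        y = (poly g1 1 / poly h1 1, poly g2 1 / poly h2 1))"

definition R_equiv :: "('a::field \<Rightarrow> 'b::field) \<Rightarrow> ('a \<Rightarrow> 'c::field) \<Rightarrow> ('b \<times> 'c) \<Rightarrow> ('b \<times> 'c) \<Rightarrow> bool" where
  "R_equiv i1 i2 = (\<lambda>x y. R_link i1 i2 x y \<or> R_link i1 i2 y x)\<^sup>*\<^sup>*"

end

theory Submission
  imports Defs "Jordan_Normal_Form.Determinant" "HOL-Computational_Algebra.Primes"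
begin



definition gev :: "('a::field \<Rightarrow> int) \<Rightarrow> int \<Rightarrow> 'a \<Rightarrow> bool" where
  "gev w n x \<longleftrightarrow> x = 0 \<or> n \<le> w x"

lemma gev_zero[simp]: "gev w n 0"
  by (simp add: gev_def)

lemma gev_self: "gev w (w x) x"
  by (simp add: gev_def)

lemma gev_mono: "m \<le> n \<Longrightarrow> gev w n x \<Longrightarrow> gev w m x"
  by (auto simp: gev_def)

context
  fixes w :: "'a::field \<Rightarrow> int"
  assumes dv: "discrete_valuation w"
begin

lemma dv_mult: "x \<noteq> 0 \<Longrightarrow> y \<noteq> 0 \<Longrightarrow> w (x * y) = w x + w y"
  using dv unfolding discrete_valuation_def by blast

lemma dv_ultra: "x \<noteq> 0 \<Longrightarrow> y \<noteq> 0 \<Longrightarrow> x + y \<noteq> 0 \<Longrightarrow> min (w x) (w y) \<le> w (x + y)"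
  using dv unfolding discrete_valuation_def by blast

lemma dv_surj: "\<exists>x. x \<noteq> 0 \<and> w x = n"
  using dv unfolding discrete_valuation_def by blast

lemma dv_one[simp]: "w 1 = 0"
  using dv_mult[of 1 1] by simp

lemma dv_inverse: "x \<noteq> 0 \<Longrightarrow> w (inverse x) = - w x"
  using dv_mult[of x "inverse x"] by simp

lemma dv_divide: "x \<noteq> 0 \<Longrightarrow> y \<noteq> 0 \<Longrightarrow> w (x / y) = w x - w y"
  by (simp add: divide_inverse dv_mult dv_inverse)

lemma dv_minus_one[simp]: "w (-1) = 0"
  using dv_mult[of "-1" "-1"] by simp

lemma dv_uminus[simp]: "w (- x) = w x"
proof (cases "x = 0")
  case False then show ?thesis using dv_mult[of "-1" x] by simp
qed simp

lemma dv_power: "x \<noteq> 0 \<Longrightarrow> w (x ^ k) = int k * w x"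
  by (induction k) (simp_all add: dv_mult algebra_simps)

lemma dv_prod: "finite J \<Longrightarrow> (\<And>j. j \<in> J \<Longrightarrow> f j \<noteq> 0) \<Longrightarrow> w (prod f J) = (\<Sum>j\<in>J. w (f j))"
  by (induction J rule: finite_induct) (simp_all add: dv_mult)

lemma gev_add: "gev w n x \<Longrightarrow> gev w n y \<Longrightarrow> gev w n (x + y)"
  unfolding gev_def
  by (metis add.commute add_0 dv_ultra min.bounded_iff order.trans)

lemma gev_uminus[simp]: "gev w n (- x) = gev w n x"
  by (simp add: gev_def)

lemma gev_diff: "gev w n x \<Longrightarrow> gev w n y \<Longrightarrow> gev w n (x - y)"
  using gev_add[of n x "-y"] by simp

lemma gev_mult: "gev w a x \<Longrightarrow> gev w b y \<Longrightarrow> gev w (a + b) (x * y)"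
  unfolding gev_def by (cases "x = 0"; cases "y = 0") (auto simp: dv_mult)

lemma gev_sum: "(\<And>j. j \<in> J \<Longrightarrow> gev w n (f j)) \<Longrightarrow> gev w n (sum f J)"
proof (induction J rule: infinite_finite_induct)
  case (insert x F) then show ?case by (simp add: gev_add)
qed simp_all

lemma gev_all: assumes "\<And>n. gev w n x" shows "x = 0"
proof (rule ccontr)
  assume "x \<noteq> 0"
  with gev_def[of w "w x + 1" x] show False using assms[of "w x + 1"] by simp
qed

lemma gev_nonzero: "x \<noteq> 0 \<Longrightarrow> gev w n x \<longleftrightarrow> n \<le> w x"
  by (simp add: gev_def)

lemma dv_strict: assumes "x \<noteq> 0" "gev w (w x + 1) y" shows "x + y \<noteq> 0 \<and> w (x + y) = w x"
proof -
  have "x + y \<noteq> 0"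
  proof
    assume "x + y = 0" then have "y = - x" by (simp add: eq_neg_iff_add_eq_0 add.commute)
    then show False using assms by (simp add: gev_def)
  qed
  moreover have "w (x + y) \<ge> w x"
    using assms \<open>x + y \<noteq> 0\<close> dv_ultra[of x y] by (cases "y = 0") (auto simp: gev_def)
  moreover have "w (x + y) \<le> w x"
  proof (rule ccontr)
    assume "\<not> w (x + y) \<le> w x"
    then have "gev w (w x + 1) (x + y)" using \<open>x + y \<noteq> 0\<close> by (simp add: gev_def)
    then have "gev w (w x + 1) ((x + y) - y)" using assms gev_diff by blast
    then show False using assms by (simp add: gev_def)
  qed
  ultimately show ?thesis by simp
qed

lemma gev_of_nat: "gev w 0 (of_nat n)"
proof (induction n)
  case (Suc n)
  have h1: "gev w 0 (1::'a)" by (simp add: gev_def)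
  show ?case using gev_add[OF h1 Suc.IH] by simp
qed (simp add: gev_def)

lemma gev_power: "gev w a x \<Longrightarrow> gev w (int k * a) (x ^ k)"
proof (induction k)
  case 0 then show ?case by (simp add: gev_def)
next
  case (Suc k)
  then have "gev w (a + int k * a) (x * x ^ k)" using gev_mult by blast
  then show ?case by (simp add: algebra_simps)
qed

lemma gev_prod: "(\<And>j. j \<in> J \<Longrightarrow> gev w 0 (f j)) \<Longrightarrow> gev w 0 (prod f J)"
proof (induction J rule: infinite_finite_induct)
  case (insert x F) then show ?case using gev_mult[of 0 "f x" 0] by simp
qed (simp_all add: gev_def)

end

lemma complete_gev:
  fixes v :: "'a::field \<Rightarrow> int" and X :: "nat \<Rightarrow> 'a"
  assumes "complete_wrt v"
    and "\<And>n. \<exists>N. \<forall>m\<ge>N. \<forall>k\<ge>N. gev v n (X m - X k)"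
  shows "\<exists>l. \<forall>n. \<exists>N. \<forall>m\<ge>N. gev v n (X m - l)"
proof -
  have "\<forall>n::int. \<exists>N. \<forall>m\<ge>N. \<forall>k\<ge>N. X m = X k \<or> n \<le> v (X m - X k)"
    using assms(2) unfolding gev_def by simp
  from spec[OF assms(1)[unfolded complete_wrt_def], of X] this
  obtain l where "\<forall>n::int. \<exists>N. \<forall>m\<ge>N. X m = l \<or> n \<le> v (X m - l)" by blast
  then show ?thesis unfolding gev_def by auto
qed

lemma finite_eventually:
  assumes "finite I" "\<And>k. k \<in> I \<Longrightarrow> \<exists>N::nat. \<forall>m\<ge>N. P k m"
  shows "\<exists>N. \<forall>m\<ge>N. \<forall>k\<in>I. P k m"
  using assms
proof (induction I rule: finite_induct)
  case (insert x F)
  then obtain N1 where "\<forall>m\<ge>N1. \<forall>k\<in>F. P k m" by blast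
  moreover obtain N2 where "\<forall>m\<ge>N2. P x m" using insert by blast
  ultimately show ?case by (intro exI[of _ "max N1 N2"]) auto
qed simp

context
  fixes i :: "'a::field \<Rightarrow> 'b::field"
  assumes fe: "field_emb i"
begin

lemma fe_add: "i (x + y) = i x + i y" using fe unfolding field_emb_def by blast
lemma fe_mult: "i (x * y) = i x * i y" using fe unfolding field_emb_def by blast
lemma fe_one[simp]: "i 1 = 1" using fe unfolding field_emb_def by blast
lemma fe_zero[simp]: "i 0 = 0"
proof -
  have "i 0 + i 0 = i 0 + 0" using fe_add[of 0 0] by simp
  then show ?thesis by (rule add_left_imp_eq)
qed
lemma fe_uminus: "i (- x) = - i x"
proof -
  have "i x + i (-x) = 0" using fe_add[of x "-x"] by simp
  then show ?thesis by (simp add: add_eq_0_iff)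
qed
lemma fe_diff: "i (x - y) = i x - i y" using fe_add[of x "-y"] fe_uminus[of y] by simp
lemma fe_eq0[simp]: "i x = 0 \<longleftrightarrow> x = 0"
proof
  assume "i x = 0"
  show "x = 0"
  proof (rule ccontr)
    assume "x \<noteq> 0"
    then have "i x * i (inverse x) = 1" using fe_mult[of x "inverse x"] by simp
    then show False using \<open>i x = 0\<close> by simp
  qed
qed simp
lemma fe_inj: "i x = i y \<longleftrightarrow> x = y"
  using fe_eq0[of "x - y"] fe_diff by auto
lemma fe_inverse: "i (inverse x) = inverse (i x)"
proof (cases "x = 0")
  case False
  then have "i x * i (inverse x) = 1" using fe_mult[of x "inverse x"] by simp
  then show ?thesis by (metis inverse_unique)
qed simp
lemma fe_divide: "i (x / y) = i x / i y"
  by (simp add: divide_inverse fe_mult fe_inverse)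
lemma fe_power: "i (x ^ k) = i x ^ k"
  by (induction k) (simp_all add: fe_mult)
lemma fe_sum: "i (sum f J) = (\<Sum>j\<in>J. i (f j))"
  by (induction J rule: infinite_finite_induct) (simp_all add: fe_add)
lemma fe_prod: "i (prod f J) = (\<Prod>j\<in>J. i (f j))"
  by (induction J rule: infinite_finite_induct) (simp_all add: fe_mult)
lemma fe_of_nat: "i (of_nat n) = of_nat n"
  by (induction n) (simp_all add: fe_add)

end

section \<open>Norm-type bounds for valuations on finite extensions\<close>

definition indep :: "('a::field \<Rightarrow> 'b::field) \<Rightarrow> (nat \<Rightarrow> 'b) \<Rightarrow> nat set \<Rightarrow> bool" where
  "indep i b I \<longleftrightarrow> (\<forall>d. (\<Sum>k\<in>I. i (d k) * b k) = 0 \<longrightarrow> (\<forall>k\<in>I. d k = 0))"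

lemma indep_subset: assumes "indep i b I" "J \<subseteq> I" "finite I" "field_emb i" shows "indep i b J"
  unfolding indep_def
proof (intro allI impI ballI)
  fix d k assume h: "(\<Sum>k\<in>J. i (d k) * b k) = 0" "k \<in> J"
  let ?d = "\<lambda>k. if k \<in> J then d k else 0"
  have eq: "(\<Sum>k\<in>I. i (?d k) * b k) = (\<Sum>k\<in>J. i (d k) * b k)"
    using assms by (auto simp: if_distrib[of i] fe_zero intro!: sum.mono_neutral_cong_right)
  have "\<forall>k\<in>I. ?d k = 0" using assms(1)[unfolded indep_def, rule_format, of ?d] eq h(1) by simp
  then have "?d k = 0" using h(2) assms(2) by blast
  then show "d k = 0" using h(2) by simp
qed

context
  fixes v :: "'a::field \<Rightarrow> int" and w :: "'b::field \<Rightarrow> int" and i :: "'a \<Rightarrow> 'b" and e :: int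
    and b :: "nat \<Rightarrow> 'b"
  assumes dvv: "discrete_valuation v" and dvw: "discrete_valuation w" and cpl: "complete_wrt v"
    and fe: "field_emb i" and epos: "e > 0" and ext: "\<And>a. a \<noteq> 0 \<Longrightarrow> w (i a) = e * v a"
begin

lemma gev_i: "gev v n a \<Longrightarrow> gev w (e * n) (i a)"
  unfolding gev_def using epos by (cases "a = 0") (auto simp: ext fe_eq0[OF fe])

lemma gev_i_rev: "gev w (e * n) (i a) \<Longrightarrow> gev v n a"
  unfolding gev_def using epos by (cases "a = 0") (auto simp: ext fe_eq0[OF fe])

lemma easy_bound:
  assumes "finite I"
  shows "\<exists>C0. \<forall>d n. (\<forall>k\<in>I. gev v n (d k)) \<longrightarrow> gev w (e * n - C0) (\<Sum>k\<in>I. i (d k) * b k)"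
proof -
  define C0 where "C0 = (\<Sum>k\<in>I. \<bar>w (b k)\<bar>)"
  have wb: "w (b k) \<ge> - C0" if "k \<in> I" for k
  proof -
    have "\<bar>w (b k)\<bar> \<le> C0" unfolding C0_def using assms that
      by (intro member_le_sum) auto
    then show ?thesis by simp
  qed
  show ?thesis
  proof (intro exI allI impI)
    fix d n assume h: "\<forall>k\<in>I. gev v n (d k)"
    show "gev w (e * n - C0) (\<Sum>k\<in>I. i (d k) * b k)"
    proof (intro gev_sum[OF dvw])
      fix k assume k: "k \<in> I"
      have "gev w (e * n + w (b k)) (i (d k) * b k)"
        using gev_mult[OF dvw gev_i[OF h[rule_format, OF k]] gev_self] .
      then show "gev w (e * n - C0) (i (d k) * b k)"
        by (rule gev_mono[rotated]) (use wb[OF k] in simp)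
    qed
  qed
qed

lemma hard_bound:
  assumes "finite I" "indep i b I" "s \<in> I"
  shows "\<exists>C. \<forall>d n. gev w n (\<Sum>k\<in>I. i (d k) * b k) \<longrightarrow> gev v ((n - C) div e) (d s)"
  using assms
proof (induction "card I" arbitrary: I s rule: less_induct)
  case less
  define I' where "I' = I - {s}"
  have fI': "finite I'" using less by (simp add: I'_def)
  have indI': "indep i b I'" using indep_subset[OF less(3) _ less(2) fe] by (auto simp: I'_def)
  have "\<forall>t\<in>I'. \<exists>C. \<forall>d n. gev w n (\<Sum>k\<in>I'. i (d k) * b k) \<longrightarrow> gev v ((n - C) div e) (d t)"
  proof
    fix t assume "t \<in> I'"
    moreover have "card I' < card I" using card_Diff1_less[OF less(2) less(4)] by (simp add: I'_def)
    ultimately show "\<exists>C. \<forall>d n. gev w n (\<Sum>k\<in>I'. i (d k) * b k) \<longrightarrow> gev v ((n - C) div e) (d t)"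
      using less(1) fI' indI' by blast
  qed
  note exC = this
  define Cf where "Cf t = (SOME C. \<forall>d n. gev w n (\<Sum>k\<in>I'. i (d k) * b k) \<longrightarrow> gev v ((n - C) div e) (d t))" for t
  have Cf0: "\<forall>d n. gev w n (\<Sum>k\<in>I'. i (d k) * b k) \<longrightarrow> gev v ((n - Cf t) div e) (d t)" if "t \<in> I'" for t
    unfolding Cf_def using exC[rule_format, OF that] by (rule someI_ex)
  have Cf: "gev v ((n - Cf t) div e) (d t)" if "t \<in> I'" "gev w n (\<Sum>k\<in>I'. i (d k) * b k)" for t d n
    using Cf0[OF that(1)] that(2) by blast
  define C1 where "C1 = (\<Sum>t\<in>I'. \<bar>Cf t\<bar>)"
  have C1: "gev v ((n - C1) div e) (d t)" if "t \<in> I'" "gev w n (\<Sum>k\<in>I'. i (d k) * b k)" for t d n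
  proof -
    have "\<bar>Cf t\<bar> \<le> C1" unfolding C1_def using fI' that by (intro member_le_sum) auto
    then have "(n - C1) div e \<le> (n - Cf t) div e" using epos by (intro zdiv_mono1) auto
    then show ?thesis using gev_mono Cf[OF that] by blast
  qed
  obtain C0 where C0: "\<And>d n. (\<forall>k\<in>I'. gev v n (d k)) \<Longrightarrow> gev w (e * n - C0) (\<Sum>k\<in>I'. i (d k) * b k)"
    using easy_bound[OF fI'] by blast
  have split: "(\<Sum>k\<in>I. f k) = f s + (\<Sum>k\<in>I'. f k)" for f :: "nat \<Rightarrow> 'b"
    unfolding I'_def using less by (simp add: sum.remove)
  show ?case
  proof (rule ccontr)
    assume nC: "\<not> ?case"
    have "\<forall>m::nat. \<exists>d n. gev w n (\<Sum>k\<in>I. i (d k) * b k) \<and> \<not> gev v ((n - int m) div e) (d s)"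
      using nC by blast
    note exD = this
    define D where "D m = (SOME d. \<exists>n. gev w n (\<Sum>k\<in>I. i (d k) * b k) \<and> \<not> gev v ((n - int m) div e) (d s))" for m
    have exN: "\<exists>n. gev w n (\<Sum>k\<in>I. i (D m k) * b k) \<and> \<not> gev v ((n - int m) div e) (D m s)" for m
      unfolding D_def using exD[rule_format, of m] by (rule someI_ex)
    define Nn where "Nn m = (SOME n. gev w n (\<Sum>k\<in>I. i (D m k) * b k) \<and> \<not> gev v ((n - int m) div e) (D m s))" for m
    have DN0: "gev w (Nn m) (\<Sum>k\<in>I. i (D m k) * b k) \<and> \<not> gev v ((Nn m - int m) div e) (D m s)" for m
      unfolding Nn_def using exN[of m] by (rule someI_ex)
    have DN: "\<And>m. gev w (Nn m) (\<Sum>k\<in>I. i (D m k) * b k)"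
      "\<And>m. \<not> gev v ((Nn m - int m) div e) (D m s)" using DN0 by blast+
    have Ds0: "D m s \<noteq> 0" for m using DN(2)[of m] by (auto simp: gev_def)
    have Dsv: "e * v (D m s) < Nn m - int m" for m
    proof -
      have "v (D m s) < (Nn m - int m) div e" using DN(2)[of m] Ds0[of m] by (simp add: gev_def)
      then have "v (D m s) + 1 \<le> (Nn m - int m) div e" by simp
      then have "e * (v (D m s) + 1) \<le> e * ((Nn m - int m) div e)" using epos by simp
      also have "\<dots> \<le> Nn m - int m"
        using pos_mod_sign[OF epos, of "Nn m - int m"] mult_div_mod_eq[of e "Nn m - int m"] by linarith
      finally show ?thesis using epos by (simp add: algebra_simps)
    qed
    define dd where "dd m k = D m k / D m s" for m k
    define S where "S m = (\<Sum>k\<in>I. i (dd m k) * b k)" for m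
    have dds: "dd m s = 1" for m using Ds0 by (simp add: dd_def)
    have S_eq: "S m = (\<Sum>k\<in>I. i (D m k) * b k) / i (D m s)" for m
      unfolding S_def dd_def by (simp add: fe_divide[OF fe] sum_divide_distrib)
    have Sm: "gev w (int m) (S m)" for m
    proof (cases "(\<Sum>k\<in>I. i (D m k) * b k) = 0")
      case True then show ?thesis by (simp add: S_eq)
    next
      case False
      have "w (S m) = w (\<Sum>k\<in>I. i (D m k) * b k) - e * v (D m s)"
        using False Ds0 by (simp add: S_eq dv_divide[OF dvw] ext fe_eq0[OF fe])
      moreover have "Nn m \<le> w (\<Sum>k\<in>I. i (D m k) * b k)" using DN(1)[of m] False by (simp add: gev_def)
      ultimately show ?thesis using Dsv[of m] by (simp add: gev_def)
    qed
    define Z where "Z m = (\<Sum>k\<in>I'. i (dd m k) * b k)" for m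
    have SZ: "S m = b s + Z m" for m unfolding S_def Z_def split by (simp add: dds fe_one[OF fe])
    have cauchy: "\<exists>l. \<forall>n. \<exists>N. \<forall>m\<ge>N. gev v n (dd m t - l)" if t: "t \<in> I'" for t
    proof (rule complete_gev[OF cpl])
      fix n :: int
      show "\<exists>N. \<forall>m\<ge>N. \<forall>k\<ge>N. gev v n (dd m t - dd k t)"
      proof (intro exI allI impI)
        fix m k :: nat
        assume m: "nat (C1 + e * \<bar>n\<bar>) \<le> m" and k: "nat (C1 + e * \<bar>n\<bar>) \<le> k"
        let ?d = "\<lambda>j. dd m j - dd k j"
        have eqS: "(\<Sum>j\<in>I'. i (?d j) * b j) = S m - S k"
          unfolding SZ Z_def by (simp add: fe_diff[OF fe] algebra_simps sum_subtractf)
        have g1: "gev w (int (min m k)) (S m)" by (rule gev_mono[OF _ Sm[of m]]) simp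
        have g2: "gev w (int (min m k)) (S k)" by (rule gev_mono[OF _ Sm[of k]]) simp
        have "gev w (int (min m k)) (\<Sum>j\<in>I'. i (?d j) * b j)"
          unfolding eqS by (rule gev_diff[OF dvw g1 g2])
        from C1[OF t this] have "gev v ((int (min m k) - C1) div e) (?d t)" .
        moreover have "n \<le> (int (min m k) - C1) div e"
        proof -
          have "C1 + e * \<bar>n\<bar> \<le> int m" "C1 + e * \<bar>n\<bar> \<le> int k" using m k by linarith+
          then have "e * \<bar>n\<bar> \<le> int (min m k) - C1" by (simp add: min_def)
          moreover have "e * n \<le> e * \<bar>n\<bar>" using epos by (intro mult_left_mono) auto
          ultimately have "e * n \<le> int (min m k) - C1" by linarith
          from zdiv_mono1[OF this epos] show ?thesis using epos by simp
        qed
        ultimately show "gev v n (dd m t - dd k t)" using gev_mono by blast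
      qed
    qed
    note exl = this
    define lf where "lf t = (SOME l. \<forall>n. \<exists>N. \<forall>m\<ge>N. gev v n (dd m t - l))" for t
    have lf0: "\<forall>n. \<exists>N. \<forall>m\<ge>N. gev v n (dd m t - lf t)" if "t \<in> I'" for t
      unfolding lf_def using exl[OF that] by (rule someI_ex)
    have lf: "\<exists>N. \<forall>m\<ge>N. gev v n (dd m t - lf t)" if "t \<in> I'" for t n
      using lf0[OF that] by blast
    define z where "z = (\<Sum>k\<in>I'. i (lf k) * b k)"
    have "gev w n (z + b s)" for n
    proof -
      define n' where "n' = \<bar>n\<bar> + \<bar>C0\<bar>"
      obtain N where N: "\<forall>m\<ge>N. \<forall>k\<in>I'. gev v n' (dd m k - lf k)"
        using finite_eventually[OF fI', of "\<lambda>k m. gev v n' (dd m k - lf k)"] lf by blast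
      define m where "m = max N (nat \<bar>n\<bar>)"
      have "gev w (e * n' - C0) (\<Sum>k\<in>I'. i (dd m k - lf k) * b k)"
        using C0 N m_def by simp
      moreover have "(\<Sum>k\<in>I'. i (dd m k - lf k) * b k) = Z m - z"
        unfolding Z_def z_def by (simp add: fe_diff[OF fe] algebra_simps sum_subtractf)
      moreover have "n \<le> e * n' - C0"
      proof -
        have "1 * n' \<le> e * n'" using epos unfolding n'_def by (intro mult_right_mono) auto
        then have "n' \<le> e * n'" by simp
        then show ?thesis unfolding n'_def by linarith
      qed
      ultimately have a: "gev w n (Z m - z)" using gev_mono[of n "e * n' - C0"] by simp
      have "nat \<bar>n\<bar> \<le> m" unfolding m_def by simp
      then have "n \<le> int m" by linarith
      then have "gev w n (S m)" using Sm[of m] gev_mono by blast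
      then have "gev w n (S m - (Z m - z))" using gev_diff[OF dvw] a by blast
      then show ?thesis using SZ[of m] by (simp add: algebra_simps)
    qed
    then have zs: "z + b s = 0" using gev_all[OF dvw] by blast
    define dh where "dh k = (if k = s then 1 else lf k)" for k
    have "(\<Sum>k\<in>I. i (dh k) * b k) = b s + (\<Sum>k\<in>I'. i (dh k) * b k)"
      using split by (simp add: dh_def fe_one[OF fe])
    also have "(\<Sum>k\<in>I'. i (dh k) * b k) = z" unfolding z_def dh_def I'_def by simp
    finally have "(\<Sum>k\<in>I. i (dh k) * b k) = 0" using zs by (simp add: add.commute)
    then have "dh s = 0" using less(3,4) unfolding indep_def by blast
    then show False by (simp add: dh_def)
  qed
qed

end

lemma ext_degree_basis:
  assumes "ext_degree_eq i n" "field_emb i"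
  obtains b where "indep i b {..<n}" "\<And>y. \<exists>c. y = (\<Sum>k<n. i (c k) * b k)"
proof -
  obtain b where b: "\<And>y. \<exists>!c. (\<forall>k\<ge>n. c k = 0) \<and> y = (\<Sum>k<n. i (c k) * b k)"
    using assms(1) unfolding ext_degree_eq_def by blast
  have "indep i b {..<n}" unfolding indep_def
  proof (intro allI impI ballI)
    fix d k assume h: "(\<Sum>k\<in>{..<n}. i (d k) * b k) = 0" "k \<in> {..<n}"
    let ?d = "\<lambda>k. if k < n then d k else 0"
    define P where "P c \<longleftrightarrow> (\<forall>k\<ge>n. c k = 0) \<and> (0::'b) = (\<Sum>k<n. i (c k) * b k)" for c
    have u: "\<exists>!c. P c" unfolding P_def by (rule b)
    have "P ?d" unfolding P_def using h by simp
    moreover have "P (\<lambda>k. 0)" unfolding P_def using assms(2) by simp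
    ultimately have "?d = (\<lambda>k. 0)" using the1_equality[OF u] by metis
    from fun_cong[OF this, of k] have "?d k = 0" by simp
    then show "d k = 0" using h(2) by simp
  qed
  moreover have "\<exists>c. y = (\<Sum>k<n. i (c k) * b k)" for y using b[of y] by blast
  ultimately show ?thesis using that by blast
qed

lemma pos_transfer:
  fixes v :: "'a::field \<Rightarrow> int" and w1 w2 :: "'b::field \<Rightarrow> int" and i :: "'a \<Rightarrow> 'b"
  assumes dvv: "discrete_valuation v" and cpl: "complete_wrt v" and fe: "field_emb i"
    and deg: "ext_degree_eq i n" and dv1: "discrete_valuation w1" and dv2: "discrete_valuation w2"
    and epos: "e > 0" and ext1: "\<And>a. a \<noteq> 0 \<Longrightarrow> w1 (i a) = e * v a"
    and ext2: "\<And>a. a \<noteq> 0 \<Longrightarrow> w2 (i a) = e * v a"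
    and x: "x \<noteq> 0" "w1 x > 0"
  shows "w2 x > 0"
proof -
  obtain b where ind: "indep i b {..<n}" and sp: "\<And>y. \<exists>c. y = (\<Sum>k<n. i (c k) * b k)"
    using ext_degree_basis[OF deg fe] by blast
  have exC: "\<exists>C. \<forall>d m. gev w1 m (\<Sum>k\<in>{..<n}. i (d k) * b k) \<longrightarrow> gev v ((m - C) div e) (d s)" if "s < n" for s
    by (rule hard_bound[OF dvv dv1 cpl fe epos ext1 _ ind]) (use that in simp_all)
  define Cf where "Cf s = (SOME C. \<forall>d m. gev w1 m (\<Sum>k\<in>{..<n}. i (d k) * b k) \<longrightarrow> gev v ((m - C) div e) (d s))" for s
  have Cf: "\<forall>d m. gev w1 m (\<Sum>k\<in>{..<n}. i (d k) * b k) \<longrightarrow> gev v ((m - Cf s) div e) (d s)" if "s < n" for s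
    unfolding Cf_def by (rule someI_ex) (rule exC[OF that])
  define C where "C = (\<Sum>s<n. \<bar>Cf s\<bar>)"
  have CC: "gev v ((m - C) div e) (d s)" if "s < n" "gev w1 m (\<Sum>k\<in>{..<n}. i (d k) * b k)" for s d m
  proof -
    have "\<bar>Cf s\<bar> \<le> C" unfolding C_def using that by (intro member_le_sum) auto
    then have "(m - C) div e \<le> (m - Cf s) div e" using epos by (intro zdiv_mono1) auto
    then show ?thesis using gev_mono Cf[OF that(1)] that(2) by blast
  qed
  obtain C0 where C0: "\<And>d m. (\<forall>k\<in>{..<n}. gev v m (d k)) \<Longrightarrow> gev w2 (e * m - C0) (\<Sum>k\<in>{..<n}. i (d k) * b k)"
    using easy_bound[OF dvv dv2 cpl fe epos ext2, of "{..<n}" b] by blast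
  define K where "K = C + e + \<bar>C0\<bar>"
  define M where "M = nat K + 1"
  obtain c where c: "x ^ M = (\<Sum>k<n. i (c k) * b k)" using sp by blast
  have "w1 (x ^ M) = int M * w1 x" using dv_power[OF dv1 x(1)] .
  moreover have "int M * 1 \<le> int M * w1 x" using x(2) by (intro mult_left_mono) auto
  ultimately have "gev w1 (int M) (x ^ M)" using x by (simp add: gev_def)
  then have "gev v ((int M - C) div e) (c s)" if "s < n" for s using CC[OF that] c by simp
  then have "gev w2 (e * ((int M - C) div e) - C0) (x ^ M)" using C0 c by simp
  then have h: "e * ((int M - C) div e) - C0 \<le> int M * w2 x"
    using x dv_power[OF dv2 x(1)] by (simp add: gev_def)
  have "int M - C - e < e * ((int M - C) div e)"
    using pos_mod_bound[OF epos, of "int M - C"] mult_div_mod_eq[of e "int M - C"] by linarith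
  then have "int M - K \<le> int M * w2 x" using h unfolding K_def by linarith
  moreover have "int M - K \<ge> 1" unfolding M_def by simp
  ultimately have "1 \<le> int M * w2 x" by linarith
  show ?thesis
  proof (rule ccontr)
    assume "\<not> 0 < w2 x"
    then have "int M * w2 x \<le> 0" by (simp add: mult_nonneg_nonpos)
    then show False using \<open>1 \<le> int M * w2 x\<close> by linarith
  qed
qed

lemma val_unique:
  fixes v :: "'a::field \<Rightarrow> int" and w1 w2 :: "'b::field \<Rightarrow> int" and i :: "'a \<Rightarrow> 'b"
  assumes dvv: "discrete_valuation v" and cpl: "complete_wrt v" and fe: "field_emb i"
    and deg: "ext_degree_eq i n" and dv1: "discrete_valuation w1" and dv2: "discrete_valuation w2"
    and epos: "e > 0" and ext1: "\<And>a. a \<noteq> 0 \<Longrightarrow> w1 (i a) = e * v a"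
    and ext2: "\<And>a. a \<noteq> 0 \<Longrightarrow> w2 (i a) = e * v a"
    and x: "x \<noteq> 0"
  shows "w2 x = w1 x"
proof -
  have P21: "w1 y > 0" if "y \<noteq> 0" "w2 y > 0" for y
    using pos_transfer[of v i n w2 w1 e y] dvv cpl fe deg dv2 dv1 epos ext2 ext1 that by blast
  obtain c where c: "c \<noteq> 0" "v c = w1 x" using dv_surj[OF dvv] by blast
  define z where "z = x ^ nat e / i c"
  have ic: "i c \<noteq> 0" using c fe_eq0[OF fe] by simp
  have z0: "z \<noteq> 0" unfolding z_def using x ic by simp
  have "w1 z = e * w1 x - e * v c" unfolding z_def
    using dv_divide[OF dv1 _ ic, of "x ^ nat e"] dv_power[OF dv1 x] ext1[OF c(1)] x epos by simp
  then have w1z: "w1 z = 0" using c by simp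
  have "w2 z = 0"
  proof (rule ccontr)
    assume "w2 z \<noteq> 0"
    then consider "w2 z > 0" | "w2 (inverse z) > 0" using dv_inverse[OF dv2 z0] by linarith
    then show False
    proof cases
      case 1 then show ?thesis using P21[OF z0] w1z by simp
    next
      case 2 then show ?thesis using P21[of "inverse z"] z0 w1z dv_inverse[OF dv1 z0] by simp
    qed
  qed
  moreover have "w2 z = e * w2 x - e * v c" unfolding z_def
    using dv_divide[OF dv2 _ ic, of "x ^ nat e"] dv_power[OF dv2 x] ext2[OF c(1)] x epos by simp
  ultimately have "e * w2 x = e * w1 x" using c by simp
  then show ?thesis using epos by simp
qed


section \<open>Hensel: p-th roots of principal units\<close>

lemma binom_expand:
  fixes v :: "'a::field \<Rightarrow> int"
  assumes dv: "discrete_valuation v" and r: "gev v 0 r" and h: "gev v 0 h"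
  shows "\<exists>E. gev v 0 E \<and> (r + h) ^ Suc k = r ^ Suc k + of_nat (Suc k) * r ^ k * h + h^2 * E"
proof (induction k)
  case 0 then show ?case by (intro exI[of _ 0]) simp
next
  case (Suc k)
  then obtain E where E: "gev v 0 E" "(r + h) ^ Suc k = r ^ Suc k + of_nat (Suc k) * r ^ k * h + h^2 * E"
    by blast
  define E' where "E' = r * E + of_nat (Suc k) * r ^ k + h * E"
  have a1: "gev v 0 (r * E)" using gev_mult[OF dv r E(1)] by simp
  have a2: "gev v 0 (r ^ k)" using gev_power[OF dv r, of k] by simp
  have a3: "gev v 0 (of_nat (Suc k) * r ^ k)" using gev_mult[OF dv gev_of_nat[OF dv, of "Suc k"] a2] by simp
  have a4: "gev v 0 (h * E)" using gev_mult[OF dv h E(1)] by simp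
  have "gev v 0 E'" unfolding E'_def by (intro gev_add[OF dv] a1 a3 a4)
  moreover have "(r + h) ^ Suc (Suc k) = r ^ Suc (Suc k) + of_nat (Suc (Suc k)) * r ^ Suc k * h + h^2 * E'"
  proof -
    have "(r + h) ^ Suc (Suc k) = (r + h) * (r ^ Suc k + of_nat (Suc k) * r ^ k * h + h^2 * E)"
      using E(2) by simp
    also have "\<dots> = r ^ Suc (Suc k) + of_nat (Suc (Suc k)) * r ^ Suc k * h + h^2 * E'"
      unfolding E'_def by (simp add: algebra_simps power2_eq_square)
    finally show ?thesis .
  qed
  ultimately show ?case by blast
qed

lemma gev_power_one:
  fixes v :: "'a::field \<Rightarrow> int"
  assumes dv: "discrete_valuation v" and r: "gev v 1 (r - 1)"
  shows "gev v 1 (r ^ k - 1)"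
proof (induction k)
  case 0 then show ?case by simp
next
  case (Suc k)
  have r0: "gev v 0 r"
  proof -
    have "gev v 0 (1 + (r - 1))" using gev_add[OF dv, of 0 1 "r - 1"] gev_mono[OF _ r]
      by (simp add: gev_def dv_one[OF dv])
    then show ?thesis by simp
  qed
  have "gev v (0 + 1) (r * (r ^ k - 1))" using gev_mult[OF dv r0 Suc.IH] .
  then have "gev v 1 (r * (r ^ k - 1) + (r - 1))" using gev_add[OF dv] r by simp
  moreover have "r * (r ^ k - 1) + (r - 1) = r ^ Suc k - 1" by (simp add: algebra_simps)
  ultimately show ?case by simp
qed

lemma hensel_root:
  fixes v :: "'a::field \<Rightarrow> int"
  assumes dv: "discrete_valuation v" and cpl: "complete_wrt v" and p: "p > 0"
    and p0: "(of_nat p :: 'a) \<noteq> 0" and vp: "v (of_nat p) = 0" and d: "gev v 1 (d - 1)"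
  shows "\<exists>r. r ^ p = d"
proof -
  obtain k where pk: "p = Suc k" using p by (cases p) auto
  define f where "f r = r + (d - r ^ p) / of_nat p" for r
  define R where "R n = (f ^^ n) 1" for n
  have RS: "R (Suc n) = f (R n)" for n by (simp add: R_def)
  have gev_divp: "gev v n (x / of_nat p)" if "gev v n x" for n x
    using that p0 vp dv_divide[OF dv _ p0, of x] by (cases "x = 0") (auto simp: gev_def)
  have step: "gev v 1 (f r - 1) \<and> gev v (N + 1) (f r ^ p - d) \<and> gev v N (f r - r)"
    if r1: "gev v 1 (r - 1)" and rN: "gev v N (r ^ p - d)" and N: "N \<ge> 1" for r N
  proof -
    define h where "h = (d - r ^ p) / of_nat p"
    have "gev v N (- (r ^ p - d))" using gev_uminus[OF dv, of N "r ^ p - d"] rN by blast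
    then have "gev v N (d - r ^ p)" by simp
    then have hN: "gev v N h" unfolding h_def by (rule gev_divp)
    have h1: "gev v 1 h" using gev_mono[OF N hN] .
    have h0: "gev v 0 h" using gev_mono[OF _ h1] by simp
    have r0: "gev v 0 r"
    proof -
      have "gev v 0 (1 + (r - 1))" using gev_add[OF dv, of 0 1 "r - 1"] gev_mono[OF _ r1]
        by (simp add: gev_def dv_one[OF dv])
      then show ?thesis by simp
    qed
    have fr: "f r = r + h" unfolding f_def h_def ..
    obtain E where E: "gev v 0 E" "(r + h) ^ Suc k = r ^ Suc k + of_nat (Suc k) * r ^ k * h + h^2 * E"
      using binom_expand[OF dv r0 h0] by blast
    have ph: "of_nat p * h = d - r ^ p" unfolding h_def using p0 by simp
    have "f r ^ p - d = (r ^ p - d) * (1 - r ^ k) + h^2 * E"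
    proof -
      have "f r ^ p = (r + h) ^ Suc k" using fr pk by simp
      also have "\<dots> = r ^ Suc k + of_nat (Suc k) * r ^ k * h + h^2 * E" by (rule E(2))
      also have "of_nat (Suc k) * r ^ k * h = r ^ k * (of_nat p * h)" unfolding pk
        by (simp only: mult.commute mult.left_commute)
      also have "r ^ k * (of_nat p * h) = r ^ k * (d - r ^ p)" by (simp only: ph)
      also have "\<dots> = r ^ k * d - r ^ k * r ^ Suc k" by (simp only: pk right_diff_distrib)
      finally have "f r ^ p = r ^ Suc k + (r ^ k * d - r ^ k * r ^ Suc k) + h^2 * E" .
      moreover have "r ^ Suc k + (r ^ k * d - r ^ k * r ^ Suc k) + h^2 * E - d = (r ^ Suc k - d) * (1 - r ^ k) + h^2 * E"
        by (simp only: left_diff_distrib right_diff_distrib mult_1_right mult.commute diff_add_eq add_diff_eq diff_diff_eq2) (simp add: algebra_simps)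
      ultimately show ?thesis using pk by simp
    qed
    moreover have "gev v (N + 1) ((r ^ p - d) * (1 - r ^ k))"
    proof -
      have "gev v 1 (1 - r ^ k)" using gev_power_one[OF dv r1, of k] gev_uminus[OF dv, of 1 "r ^ k - 1"] by simp
      then show ?thesis using gev_mult[OF dv rN] by blast
    qed
    moreover have "gev v (N + 1) (h^2 * E)"
    proof -
      have "gev v (int 2 * N) (h ^ 2)" using gev_power[OF dv hN] .
      then have "gev v (2 * N + 0) (h^2 * E)" using gev_mult[OF dv _ E(1)] by simp
      moreover have "N + 1 \<le> 2 * N + 0" using N by simp
      ultimately show ?thesis using gev_mono by blast
    qed
    ultimately have "gev v (N + 1) (f r ^ p - d)" using gev_add[OF dv] by simp
    moreover have "gev v 1 (f r - 1)" using fr gev_add[OF dv r1 h1] by (simp add: algebra_simps)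
    moreover have "gev v N (f r - r)" using fr hN by simp
    ultimately show ?thesis by blast
  qed
  have inv: "gev v 1 (R n - 1) \<and> gev v (int n + 1) (R n ^ p - d)" for n
  proof (induction n)
    case 0
    have "gev v 1 (1 - d)" using gev_uminus[OF dv, of 1 "d - 1"] d by simp
    then show ?case by (simp add: R_def)
  next
    case (Suc n)
    then show ?case using step[of "R n" "int n + 1"] RS[of n] by (simp add: add.commute)
  qed
  have inc: "gev v (int n + 1) (R (Suc n) - R n)" for n
    using step[of "R n" "int n + 1"] inv[of n] RS[of n] by simp
  have cauchy1: "gev v (int k + 1) (R m - R k)" if "k \<le> m" for k m
    using that
  proof (induction m)
    case 0 then show ?case by simp
  next
    case (Suc m)
    show ?case
    proof (cases "k = Suc m")
      case True then show ?thesis by simp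
    next
      case False
      then have "k \<le> m" using Suc.prems by simp
      then have a: "gev v (int k + 1) (R m - R k)" using Suc.IH by simp
      have "gev v (int k + 1) (R (Suc m) - R m)" using gev_mono[OF _ inc[of m]] \<open>k \<le> m\<close> by simp
      from gev_add[OF dv this a] show ?thesis by simp
    qed
  qed
  have "\<exists>l. \<forall>n. \<exists>N. \<forall>m\<ge>N. gev v n (R m - l)"
  proof (rule complete_gev[OF cpl])
    fix n :: int
    show "\<exists>N. \<forall>m\<ge>N. \<forall>k\<ge>N. gev v n (R m - R k)"
    proof (intro exI allI impI)
      fix m k assume m: "nat \<bar>n\<bar> \<le> m" and k: "nat \<bar>n\<bar> \<le> k"
      show "gev v n (R m - R k)"
      proof (cases "k \<le> m")
        case True
        have "n \<le> int k + 1" using k by linarith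
        then show ?thesis using cauchy1[OF True] gev_mono[of n "int k + 1"] by blast
      next
        case False
        then have "gev v (int m + 1) (R k - R m)" using cauchy1 by simp
        moreover have "n \<le> int m + 1" using m by linarith
        ultimately have "gev v n (R k - R m)" using gev_mono[of n "int m + 1"] by blast
        then show ?thesis using gev_uminus[OF dv, of n "R k - R m"] by simp
      qed
    qed
  qed
  then obtain l where l: "\<And>n. \<exists>N. \<forall>m\<ge>N. gev v n (R m - l)" by blast
  have "gev v n (l ^ p - d)" for n
  proof -
    obtain N where N: "\<forall>m\<ge>N. gev v (\<bar>n\<bar> + 1) (R m - l)" using l by blast
    define m where "m = max N (nat \<bar>n\<bar>)"
    have Rl: "gev v (\<bar>n\<bar> + 1) (l - R m)"
      using N m_def gev_uminus[OF dv, of _ "R m - l"] by simp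
    have R1: "gev v 1 (R m - 1)" using inv by blast
    have R0: "gev v 0 (R m)"
    proof -
      have "gev v 0 (1 + (R m - 1))" using gev_add[OF dv, of 0 1 "R m - 1"] gev_mono[OF _ R1]
        by (simp add: gev_def dv_one[OF dv])
      then show ?thesis by simp
    qed
    have l0: "gev v 0 l"
    proof -
      have "gev v 0 (l - R m)" by (rule gev_mono[OF _ Rl]) simp
      then have "gev v 0 (R m + (l - R m))" using gev_add[OF dv R0] by blast
      then show ?thesis by simp
    qed
    have "gev v 0 (\<Sum>i<p. R m ^ (p - Suc i) * l ^ i)"
    proof (intro gev_sum[OF dv])
      fix i
      have "gev v (0 + 0) (R m ^ (p - Suc i) * l ^ i)"
        using gev_mult[OF dv gev_power[OF dv R0] gev_power[OF dv l0]] by simp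
      then show "gev v 0 (R m ^ (p - Suc i) * l ^ i)" by simp
    qed
    then have "gev v (\<bar>n\<bar> + 1 + 0) ((l - R m) * (\<Sum>i<p. R m ^ (p - Suc i) * l ^ i))"
      using gev_mult[OF dv Rl] by blast
    then have a: "gev v n (l ^ p - R m ^ p)"
      using power_diff_sumr2[of l p "R m"] gev_mono[of n "\<bar>n\<bar> + 1"] by (simp add: abs_ge_self add_increasing2)
    have "gev v (int m + 1) (R m ^ p - d)" using inv by blast
    moreover have "nat \<bar>n\<bar> \<le> m" unfolding m_def by simp
    then have "n \<le> int m + 1" by linarith
    ultimately have b: "gev v n (R m ^ p - d)" using gev_mono[of n "int m + 1"] by blast
    from gev_add[OF dv a b] show ?thesis by simp
  qed
  then have "l ^ p = d" using gev_all[OF dv, of "l ^ p - d"] by simp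
  then show ?thesis by blast
qed




lemma gal_add: "\<tau> \<in> Gal i \<Longrightarrow> \<tau> (x + y) = \<tau> x + \<tau> y" unfolding Gal_def by blast
lemma gal_mult: "\<tau> \<in> Gal i \<Longrightarrow> \<tau> (x * y) = \<tau> x * \<tau> y" unfolding Gal_def by blast
lemma gal_fix: "\<tau> \<in> Gal i \<Longrightarrow> \<tau> (i a) = i a" unfolding Gal_def by blast
lemma gal_bij: "\<tau> \<in> Gal i \<Longrightarrow> bij \<tau>" unfolding Gal_def by blast
lemma gal_zero[simp]: "\<tau> \<in> Gal i \<Longrightarrow> \<tau> 0 = 0"
proof -
  assume t: "\<tau> \<in> Gal i"
  have "\<tau> 0 + \<tau> 0 = \<tau> 0 + 0" using gal_add[OF t, of 0 0] by simp
  then show ?thesis by (rule add_left_imp_eq)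
qed
lemma gal_uminus: "\<tau> \<in> Gal i \<Longrightarrow> \<tau> (- x) = - \<tau> x"
proof -
  assume t: "\<tau> \<in> Gal i"
  have "\<tau> x + \<tau> (-x) = 0" using gal_add[OF t, of x "-x"] t by simp
  then show ?thesis by (simp add: add_eq_0_iff)
qed
lemma gal_diff: "\<tau> \<in> Gal i \<Longrightarrow> \<tau> (x - y) = \<tau> x - \<tau> y"
  using gal_add[of \<tau> i x "-y"] gal_uminus[of \<tau> i y] by simp
lemma gal_eq0[simp]: "\<tau> \<in> Gal i \<Longrightarrow> \<tau> x = 0 \<longleftrightarrow> x = 0"
proof
  assume t: "\<tau> \<in> Gal i" and "\<tau> x = 0"
  then have "\<tau> x = \<tau> 0" by simp
  then show "x = 0" using injD[OF bij_is_inj[OF gal_bij[OF t]]] by blast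
qed simp
lemma gal_one: "\<tau> \<in> Gal i \<Longrightarrow> field_emb i \<Longrightarrow> \<tau> 1 = 1"
  using gal_fix[of \<tau> i 1] fe_one[of i] by simp
lemma gal_power: "\<tau> \<in> Gal i \<Longrightarrow> field_emb i \<Longrightarrow> \<tau> (x ^ k) = \<tau> x ^ k"
  by (induction k) (simp_all add: gal_one gal_mult)
lemma gal_sum: "\<tau> \<in> Gal i \<Longrightarrow> \<tau> (sum f J) = (\<Sum>j\<in>J. \<tau> (f j))"
  by (induction J rule: infinite_finite_induct) (simp_all add: gal_add)
lemma gal_prod: "\<tau> \<in> Gal i \<Longrightarrow> field_emb i \<Longrightarrow> \<tau> (prod f J) = (\<Prod>j\<in>J. \<tau> (f j))"
  by (induction J rule: infinite_finite_induct) (simp_all add: gal_mult gal_one)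
lemma gal_inverse: "\<tau> \<in> Gal i \<Longrightarrow> field_emb i \<Longrightarrow> \<tau> (inverse x) = inverse (\<tau> x)"
proof (cases "x = 0")
  case False
  assume t: "\<tau> \<in> Gal i" "field_emb i"
  then have "\<tau> x * \<tau> (inverse x) = 1" using gal_mult[OF t(1), of x "inverse x"] False gal_one[OF t] by simp
  then show ?thesis by (metis inverse_unique)
qed simp
lemma gal_divide: "\<tau> \<in> Gal i \<Longrightarrow> field_emb i \<Longrightarrow> \<tau> (x / y) = \<tau> x / \<tau> y"
  by (simp add: divide_inverse gal_mult gal_inverse)

lemma gal_id: "id \<in> Gal i" unfolding Gal_def by simp
lemma gal_comp: "\<tau> \<in> Gal i \<Longrightarrow> r \<in> Gal i \<Longrightarrow> \<tau> \<circ> r \<in> Gal i"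
  unfolding Gal_def by (auto intro: bij_comp)
lemma gal_funpow: "\<sigma> \<in> Gal i \<Longrightarrow> \<sigma> ^^ k \<in> Gal i"
  by (induction k) (simp_all add: gal_id gal_comp)
lemma gal_inv: assumes t: "\<tau> \<in> Gal i" shows "inv_into UNIV \<tau> \<in> Gal i"
proof -
  have b: "bij \<tau>" using gal_bij[OF t] .
  have ii: "inv_into UNIV \<tau> (\<tau> x) = x" for x using b by (simp add: bij_is_inj)
  have ff: "\<tau> (inv_into UNIV \<tau> x) = x" for x using b by (simp add: bij_is_surj surj_f_inv_f)
  have "inv_into UNIV \<tau> (x + y) = inv_into UNIV \<tau> x + inv_into UNIV \<tau> y" for x y
  proof -
    have "inv_into UNIV \<tau> (x + y) = inv_into UNIV \<tau> (\<tau> (inv_into UNIV \<tau> x) + \<tau> (inv_into UNIV \<tau> y))"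
      by (simp add: ff)
    also have "\<dots> = inv_into UNIV \<tau> (\<tau> (inv_into UNIV \<tau> x + inv_into UNIV \<tau> y))"
      by (simp add: gal_add[OF t])
    finally show ?thesis by (simp add: ii)
  qed
  moreover have "inv_into UNIV \<tau> (x * y) = inv_into UNIV \<tau> x * inv_into UNIV \<tau> y" for x y
  proof -
    have "inv_into UNIV \<tau> (x * y) = inv_into UNIV \<tau> (\<tau> (inv_into UNIV \<tau> x) * \<tau> (inv_into UNIV \<tau> y))"
      by (simp add: ff)
    also have "\<dots> = inv_into UNIV \<tau> (\<tau> (inv_into UNIV \<tau> x * inv_into UNIV \<tau> y))"
      by (simp add: gal_mult[OF t])
    finally show ?thesis by (simp add: ii)
  qed
  moreover have "inv_into UNIV \<tau> (i a) = i a" for a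
  proof -
    have "inv_into UNIV \<tau> (i a) = inv_into UNIV \<tau> (\<tau> (i a))" by (simp add: gal_fix[OF t])
    then show ?thesis by (simp add: ii)
  qed
  moreover have "bij (inv_into UNIV \<tau>)" using b by (simp add: bij_imp_bij_inv)
  ultimately show ?thesis unfolding Gal_def by blast
qed

lemma inj_comp_cancel: "inj g \<Longrightarrow> g \<circ> a = g \<circ> b \<Longrightarrow> a = b"
proof (rule ext)
  fix x assume "inj g" "g \<circ> a = g \<circ> b"
  then have "g (a x) = g (b x)" by (metis comp_apply)
  from injD[OF \<open>inj g\<close> this] show "a x = b x" .
qed

section \<open>Cyclic extensions\<close>

context
  fixes i :: "'a::field \<Rightarrow> 'b::field" and n :: nat
  assumes cyc: "cyclic_ext i n"
begin

lemma cyc_fe: "field_emb i" using cyc unfolding cyclic_ext_def by (rule conjunct1)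
lemma cyc_deg: "ext_degree_eq i n" using cyc unfolding cyclic_ext_def by (rule conjunct1[OF conjunct2])
lemma cyc_card: "card (Gal i) = n" using cyc unfolding cyclic_ext_def by (rule conjunct1[OF conjunct2[OF conjunct2]])
lemma cyc_ex: "\<exists>\<sigma>. \<sigma> \<in> Gal i \<and> Gal i = range (\<lambda>k. \<sigma> ^^ k)"
  using cyc unfolding cyclic_ext_def Bex_def by (rule conjunct2[OF conjunct2[OF conjunct2]])

lemma cyc_npos: "n > 0"
proof (rule ccontr)
  assume "\<not> n > 0"
  then have n0: "n = 0" by simp
  obtain b where b: "\<forall>y::'b. \<exists>!c :: nat \<Rightarrow> 'a. (\<forall>k\<ge>n. c k = 0) \<and> y = (\<Sum>k<n. i (c k) * b k)"
    using cyc_deg[unfolded ext_degree_eq_def] by (rule exE)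
  from ex1_implies_ex[OF spec[OF b, of 1]]
  obtain c :: "nat \<Rightarrow> 'a" where "(\<forall>k\<ge>n. c k = 0) \<and> (1::'b) = (\<Sum>k<n. i (c k) * b k)" by (rule exE)
  then show False using n0 by simp
qed

lemma cyc_finite: "finite (Gal i)"
  using cyc_card cyc_npos card_ge_0_finite by blast

definition gen :: "'b \<Rightarrow> 'b" where
  "gen = (SOME \<sigma>. \<sigma> \<in> Gal i \<and> Gal i = range (\<lambda>k. \<sigma> ^^ k))"

lemma gen_prop: "gen \<in> Gal i" "Gal i = range (\<lambda>k. gen ^^ k)"
proof -
  from cyc_ex have "gen \<in> Gal i \<and> Gal i = range (\<lambda>k. gen ^^ k)" unfolding gen_def by (rule someI_ex)
  then show "gen \<in> Gal i" "Gal i = range (\<lambda>k. gen ^^ k)" by auto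
qed

lemma gen_inj: "inj (gen ^^ k)"
  using gal_bij[OF gen_prop(1)] by (simp add: bij_is_inj)

lemma gen_period_exists: "\<exists>d>0. gen ^^ d = id"
proof -
  let ?f = "\<lambda>k. gen ^^ k"
  have "\<not> inj ?f"
  proof
    assume inj: "inj ?f"
    have "?f ` {..<Suc n} \<subseteq> Gal i" using gen_prop by auto
    then have "card (?f ` {..<Suc n}) \<le> n" using card_mono[OF cyc_finite] cyc_card by simp
    moreover have "card (?f ` {..<Suc n}) = Suc n" using inj by (simp add: card_image inj_on_subset)
    ultimately show False by simp
  qed
  then obtain a b where ab: "a \<noteq> b" "gen ^^ a = gen ^^ b" unfolding inj_def by blast
  have "\<exists>d>0. gen ^^ d = id" if "a < b" "gen ^^ a = gen ^^ b" for a b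
  proof -
    have "gen ^^ b = gen ^^ a \<circ> gen ^^ (b - a)" using that funpow_add[of a "b - a" gen] by simp
    then have "gen ^^ a \<circ> gen ^^ (b - a) = gen ^^ a \<circ> id" using that by simp
    then have "gen ^^ (b - a) = id" using inj_comp_cancel[OF gen_inj[of a]] by blast
    then show ?thesis using that by (intro exI[of _ "b - a"]) simp
  qed
  note * = this
  show ?thesis
  proof (cases "a < b")
    case True then show ?thesis using *[OF True ab(2)] by blast
  next
    case False then have "b < a" using ab(1) by simp
    then show ?thesis using *[OF _ ab(2)[symmetric]] by blast
  qed
qed

definition per :: nat where "per = (LEAST d. d > 0 \<and> gen ^^ d = id)"

lemma per_prop: "per > 0" "gen ^^ per = id"
  using LeastI_ex[OF gen_period_exists] unfolding per_def by auto

lemma per_min: "0 < d \<Longrightarrow> d < per \<Longrightarrow> gen ^^ d \<noteq> id"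
  using not_less_Least[of d "\<lambda>d. d > 0 \<and> gen ^^ d = id"] unfolding per_def by auto

lemma gen_mod: "gen ^^ k = gen ^^ (k mod per)"
proof -
  have "gen ^^ (per * m) = id" for m
  proof -
    have "gen ^^ (per * m) = (gen ^^ per) ^^ m" by (simp add: funpow_mult)
    moreover have "(id :: 'b \<Rightarrow> 'b) ^^ m = id" by (induction m) auto
    ultimately show ?thesis using per_prop(2) by simp
  qed
  have "gen ^^ k = gen ^^ (k mod per + per * (k div per))" by simp
  also have "\<dots> = gen ^^ (k mod per) \<circ> gen ^^ (per * (k div per))" by (rule funpow_add)
  finally have "gen ^^ k = gen ^^ (k mod per) \<circ> gen ^^ (per * (k div per))" .
  then show ?thesis using \<open>\<And>m. gen ^^ (per * m) = id\<close> by simp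
qed

lemma gen_inj_on: "inj_on (\<lambda>k. gen ^^ k) {..<per}"
proof (rule inj_onI, rule ccontr)
  fix a b assume a: "a \<in> {..<per}" and b: "b \<in> {..<per}" and eq: "gen ^^ a = gen ^^ b" and ne: "a \<noteq> b"
  have "gen ^^ (d - c) = id" if "c < d" "gen ^^ c = gen ^^ d" for c d
  proof -
    have "gen ^^ d = gen ^^ c \<circ> gen ^^ (d - c)" using that funpow_add[of c "d - c" gen] by simp
    then have "gen ^^ c \<circ> gen ^^ (d - c) = gen ^^ c \<circ> id" using that by simp
    then show "gen ^^ (d - c) = id" using inj_comp_cancel[OF gen_inj[of c]] by blast
  qed
  note * = this
  show False
  proof (cases "a < b")
    case True
    then have "gen ^^ (b - a) = id" using *[OF True eq] by blast
    moreover have "0 < b - a" "b - a < per" using True b by auto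
    ultimately show False using per_min by blast
  next
    case False
    then have "b < a" using ne by simp
    then have "gen ^^ (a - b) = id" using *[OF _ eq[symmetric]] by blast
    moreover have "0 < a - b" "a - b < per" using \<open>b < a\<close> a by auto
    ultimately show False using per_min by blast
  qed
qed

lemma gal_eq: "Gal i = (\<lambda>k. gen ^^ k) ` {..<per}"
proof -
  have "range (\<lambda>k. gen ^^ k) = (\<lambda>k. gen ^^ k) ` {..<per}"
  proof
    show "range (\<lambda>k. gen ^^ k) \<subseteq> (\<lambda>k. gen ^^ k) ` {..<per}"
    proof
      fix x assume "x \<in> range (\<lambda>k. gen ^^ k)"
      then obtain k where "x = gen ^^ k" by blast
      then have "x = gen ^^ (k mod per)" using gen_mod by simp
      moreover have "k mod per < per" using per_prop(1) by simp
      ultimately show "x \<in> (\<lambda>k. gen ^^ k) ` {..<per}" by blast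
    qed
  qed auto
  then show ?thesis using gen_prop(2) by simp
qed

lemma per_eq: "per = n"
  using cyc_card gal_eq card_image[OF gen_inj_on] by simp

lemma gen_n: "gen ^^ n = id" using per_prop per_eq by simp

lemma gen_inj_on_n: "inj_on (\<lambda>k. gen ^^ k) {..<n}" using gen_inj_on per_eq by simp

lemma gal_eq_n: "Gal i = (\<lambda>k. gen ^^ k) ` {..<n}" using gal_eq per_eq by simp

lemma prod_gal: "(\<Prod>\<tau>\<in>Gal i. f \<tau>) = (\<Prod>k<n. f (gen ^^ k))"
  unfolding gal_eq_n by (simp add: prod.reindex[OF gen_inj_on_n])

lemma sum_gal: "(\<Sum>\<tau>\<in>Gal i. f \<tau>) = (\<Sum>k<n. f (gen ^^ k))"
  unfolding gal_eq_n by (simp add: sum.reindex[OF gen_inj_on_n])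

lemma gal_reindex: assumes r: "r \<in> Gal i" shows "(\<lambda>\<tau>. r \<circ> \<tau>) ` Gal i = Gal i"
proof (rule endo_inj_surj[OF cyc_finite])
  show "(\<circ>) r ` Gal i \<subseteq> Gal i" using gal_comp[OF r] by auto
  show "inj_on ((\<circ>) r) (Gal i)"
    using gal_bij[OF r] by (intro inj_onI) (rule inj_comp_cancel[OF bij_is_inj])
qed

lemma prod_gal_shift: assumes r: "r \<in> Gal i"
  shows "(\<Prod>\<tau>\<in>Gal i. f (r \<circ> \<tau>)) = (\<Prod>\<tau>\<in>Gal i. f \<tau>)"
proof -
  have inj: "inj_on ((\<circ>) r) (Gal i)"
    using gal_bij[OF r] by (intro inj_onI) (rule inj_comp_cancel[OF bij_is_inj])
  have "(\<Prod>\<tau>\<in>Gal i. f \<tau>) = (\<Prod>\<tau>\<in>(\<lambda>\<tau>. r \<circ> \<tau>) ` Gal i. f \<tau>)" using gal_reindex[OF r] by simp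
  also have "\<dots> = (\<Prod>\<tau>\<in>Gal i. f (r \<circ> \<tau>))" using prod.reindex[OF inj] by simp
  finally show ?thesis by simp
qed


lemma prod_gal_shift_right: assumes r: "r \<in> Gal i"
  shows "(\<Prod>\<tau>\<in>Gal i. f (\<tau> \<circ> r)) = (\<Prod>\<tau>\<in>Gal i. f \<tau>)"
proof -
  have inj: "inj_on (\<lambda>\<tau>. \<tau> \<circ> r) (Gal i)"
  proof (rule inj_onI)
    fix a b assume "a \<circ> r = b \<circ> r"
    then show "a = b" using gal_bij[OF r] by (metis bij_is_surj surj_fun_eq)
  qed
  have im: "(\<lambda>\<tau>. \<tau> \<circ> r) ` Gal i = Gal i"
    by (rule endo_inj_surj[OF cyc_finite _ inj]) (use gal_comp[OF _ r] in auto)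
  have "(\<Prod>\<tau>\<in>Gal i. f \<tau>) = (\<Prod>\<tau>\<in>(\<lambda>\<tau>. \<tau> \<circ> r) ` Gal i. f \<tau>)" using im by simp
  also have "\<dots> = (\<Prod>\<tau>\<in>Gal i. f (\<tau> \<circ> r))" using prod.reindex[OF inj] by simp
  finally show ?thesis by simp
qed

end

section \<open>Dedekind independence\<close>

lemma dedekind:
  fixes \<tau> :: "nat \<Rightarrow> 'b::field \<Rightarrow> 'b"
  assumes "finite J" "inj_on \<tau> J" and mult: "\<And>j x y. \<tau> j (x * y) = \<tau> j x * \<tau> j y"
    and one: "\<And>j. \<tau> j 1 = 1"
  shows "\<forall>l. (\<forall>x. (\<Sum>j\<in>J. l j * \<tau> j x) = 0) \<longrightarrow> (\<forall>j\<in>J. l j = 0)"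
  using assms(1,2)
proof (induction J rule: finite_induct)
  case empty then show ?case by simp
next
  case (insert r J)
  show ?case
  proof (intro allI impI)
    fix l assume h: "\<forall>x. (\<Sum>j\<in>insert r J. l j * \<tau> j x) = 0"
    have h': "l r * \<tau> r x + (\<Sum>j\<in>J. l j * \<tau> j x) = 0" for x
      using h insert(1,2) by simp
    have injJ: "inj_on \<tau> J" using insert(4) by (rule inj_on_subset) auto
    have mu: "\<forall>j\<in>J. l j * (\<tau> j y - \<tau> r y) = 0" for y
    proof -
      have "(\<Sum>j\<in>J. (l j * (\<tau> j y - \<tau> r y)) * \<tau> j x) = 0" for x
      proof -
        have e1: "l r * \<tau> r x * \<tau> r y + (\<Sum>j\<in>J. l j * \<tau> j x * \<tau> j y) = 0"
          using h'[of "x * y"] by (simp add: mult mult.assoc)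
        have e2: "l r * \<tau> r x * \<tau> r y + (\<Sum>j\<in>J. l j * \<tau> j x * \<tau> r y) = 0"
        proof -
          have "(l r * \<tau> r x + (\<Sum>j\<in>J. l j * \<tau> j x)) * \<tau> r y = 0" using h'[of x] by simp
          then show ?thesis by (simp only: distrib_right sum_distrib_right)
        qed
        have "(\<Sum>j\<in>J. (l j * (\<tau> j y - \<tau> r y)) * \<tau> j x) =
              (\<Sum>j\<in>J. l j * \<tau> j x * \<tau> j y) - (\<Sum>j\<in>J. l j * \<tau> j x * \<tau> r y)"
          by (simp add: algebra_simps sum_subtractf)
        also have "\<dots> = 0" using e1 e2 by (simp add: eq_neg_iff_add_eq_0[symmetric] add.commute)
        finally show ?thesis .
      qed
      then have S: "\<forall>x. (\<Sum>j\<in>J. (\<lambda>j. l j * (\<tau> j y - \<tau> r y)) j * \<tau> j x) = 0" by simp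
      have "(\<forall>x. (\<Sum>j\<in>J. (\<lambda>j. l j * (\<tau> j y - \<tau> r y)) j * \<tau> j x) = 0) \<longrightarrow>
            (\<forall>j\<in>J. (\<lambda>j. l j * (\<tau> j y - \<tau> r y)) j = 0)"
        by (rule spec[OF insert.IH[OF injJ]])
      then show ?thesis using S by simp
    qed
    have lJ: "\<forall>j\<in>J. l j = 0"
    proof
      fix j assume j: "j \<in> J"
      have "\<tau> j \<noteq> \<tau> r" using insert(2,4) j by (metis inj_on_contraD insertCI)
      then obtain y where "\<tau> j y \<noteq> \<tau> r y" by blast
      then show "l j = 0" using mu[of y] j by auto
    qed
    then have "l r * \<tau> r 1 = 0" using h'[of 1] by simp
    then have "l r = 0" using one by simp
    then show "\<forall>j\<in>insert r J. l j = 0" using lJ by simp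
  qed
qed

context
  fixes i :: "'a::field \<Rightarrow> 'b::field" and n :: nat
  assumes cyc: "cyclic_ext i n"
begin

lemma gen_mult: "(gen i ^^ j) (x * y) = (gen i ^^ j) x * (gen i ^^ j) y"
  using gal_mult[OF gal_funpow[OF gen_prop(1)[OF cyc]]] .
lemma gen_one: "(gen i ^^ j) 1 = 1"
  using gal_one[OF gal_funpow[OF gen_prop(1)[OF cyc]] cyc_fe[OF cyc]] .

lemma dedekind_gen: "(\<forall>x. (\<Sum>j<n. l j * (gen i ^^ j) x) = 0) \<Longrightarrow> j < n \<Longrightarrow> l j = 0"
  using dedekind[of "{..<n}" "\<lambda>j. gen i ^^ j", OF _ gen_inj_on_n[OF cyc] gen_mult gen_one] by blast

lemma fixed_in_F:
  assumes fx: "\<And>\<tau>. \<tau> \<in> Gal i \<Longrightarrow> \<tau> z = z"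
  shows "\<exists>a. z = i a"
proof -
  have fe: "field_emb i" using cyc_fe[OF cyc] .
  obtain b where sp: "\<And>y. \<exists>c. y = (\<Sum>k<n. i (c k) * b k)"
    using ext_degree_basis[OF cyc_deg[OF cyc] fe] by blast
  let ?g = "\<lambda>j. gen i ^^ j"
  have gG: "?g j \<in> Gal i" for j using gal_funpow[OF gen_prop(1)[OF cyc]] .
  have gsum: "?g j (\<Sum>k<n. i (c k) * b k) = (\<Sum>k<n. i (c k) * ?g j (b k))" for j c
    using gG[of j] by (simp add: gal_sum gal_mult gal_fix)
  define M where "M = mat n n (\<lambda>(j, k). ?g j (b k))"
  have Mc: "M \<in> carrier_mat n n" unfolding M_def by simp
  have detM: "det M \<noteq> 0"
  proof
    assume "det M = 0"
    then have "det (transpose_mat M) = 0" using det_transpose[OF Mc] by simp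
    moreover have Tc: "transpose_mat M \<in> carrier_mat n n" using Mc by simp
    ultimately obtain lv where lv: "lv \<in> carrier_vec n" "lv \<noteq> 0\<^sub>v n" "transpose_mat M *\<^sub>v lv = 0\<^sub>v n"
      using det_0_iff_vec_prod_zero_field[OF Tc] by blast
    have col: "(\<Sum>j<n. ?g j (b k) * lv $ j) = 0" if k: "k < n" for k
    proof -
      have "(transpose_mat M *\<^sub>v lv) $ k = 0" using lv(3) k by simp
      moreover have "(transpose_mat M *\<^sub>v lv) $ k = (\<Sum>j<n. ?g j (b k) * lv $ j)"
        using k Mc lv(1) unfolding M_def
        by (simp add: scalar_prod_def lessThan_atLeast0)
      ultimately show ?thesis by simp
    qed
    have "\<forall>x. (\<Sum>j<n. lv $ j * ?g j x) = 0"
    proof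
      fix x
      obtain c where c: "x = (\<Sum>k<n. i (c k) * b k)" using sp by blast
      have "(\<Sum>j<n. lv $ j * ?g j x) = (\<Sum>j<n. \<Sum>k<n. lv $ j * (i (c k) * ?g j (b k)))"
        unfolding c gsum by (simp add: sum_distrib_left)
      also have "\<dots> = (\<Sum>k<n. i (c k) * (\<Sum>j<n. ?g j (b k) * lv $ j))"
        by (subst sum.swap) (simp add: sum_distrib_left algebra_simps)
      also have "\<dots> = 0" using col by simp
      finally show "(\<Sum>j<n. lv $ j * ?g j x) = 0" .
    qed
    then have "lv $ j = 0" if "j < n" for j using dedekind_gen that by blast
    then have "lv = 0\<^sub>v n" using lv(1) by (intro eq_vecI) auto
    then show False using lv(2) by simp
  qed
  obtain c where c: "z = (\<Sum>k<n. i (c k) * b k)" using sp by blast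
  obtain e where e: "1 = (\<Sum>k<n. i (e k) * b k)" using sp by blast
  define u where "u = vec n (\<lambda>k. i (c k) - z * i (e k))"
  have "M *\<^sub>v u = 0\<^sub>v n"
  proof (intro eq_vecI)
    fix j assume "j < dim_vec (0\<^sub>v n :: 'b vec)"
    then have j: "j < n" by simp
    have "(M *\<^sub>v u) $ j = (\<Sum>k<n. ?g j (b k) * (i (c k) - z * i (e k)))"
      using j Mc unfolding M_def u_def by (simp add: scalar_prod_def lessThan_atLeast0)
    also have "\<dots> = (\<Sum>k<n. i (c k) * ?g j (b k)) - z * (\<Sum>k<n. i (e k) * ?g j (b k))"
      by (simp add: algebra_simps sum_subtractf sum_distrib_left)
    also have "\<dots> = ?g j z - z * ?g j 1" unfolding gsum[symmetric] c[symmetric] e[symmetric] ..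
    also have "\<dots> = 0" using fx[OF gG[of j]] gen_one by simp
    finally show "(M *\<^sub>v u) $ j = 0\<^sub>v n $ j" using j by simp
  qed (simp add: M_def)
  moreover have "u \<in> carrier_vec n" unfolding u_def by simp
  ultimately have "u = 0\<^sub>v n"
    using det_0_iff_vec_prod_zero_field[OF Mc] detM by blast
  then have ck: "i (c k) = z * i (e k)" if "k < n" for k
  proof -
    have "u $ k = 0\<^sub>v n $ k" using \<open>u = 0\<^sub>v n\<close> by simp
    then have "i (c k) - z * i (e k) = 0" using that unfolding u_def by simp
    then show ?thesis by simp
  qed
  obtain k where k: "k < n" "e k \<noteq> 0"
  proof (rule ccontr)
    assume "\<not> thesis"
    then have "\<forall>k<n. e k = 0" using that by blast
    then have "(1::'b) = 0" using e by (simp add: fe_zero[OF fe])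
    then show False by simp
  qed
  have "z = i (c k) / i (e k)" using ck[OF k(1)] k(2) fe_eq0[OF fe] by simp
  then show ?thesis using fe_divide[OF fe] by metis
qed


lemma dependent_Suc:
  fixes z :: "nat \<Rightarrow> 'b"
  shows "\<exists>l. (\<exists>j<Suc n. l j \<noteq> 0) \<and> (\<Sum>j<Suc n. i (l j) * z j) = 0"
proof -
  have fe: "field_emb i" using cyc_fe[OF cyc] .
  obtain b where sp: "\<And>y. \<exists>c. y = (\<Sum>k<n. i (c k) * b k)"
    using ext_degree_basis[OF cyc_deg[OF cyc] fe] by blast
  define c where "c j = (SOME c. z j = (\<Sum>k<n. i (c k) * b k))" for j
  have c: "z j = (\<Sum>k<n. i (c j k) * b k)" for j
    unfolding c_def using someI_ex[OF sp[of "z j"]] .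
  define rw where "rw k = vec (Suc n) (\<lambda>j. c j k)" for k
  define A where "A = mat\<^sub>r (Suc n) (Suc n) (\<lambda>k. if k = n then 0\<^sub>v (Suc n) else rw k)"
  have Ac: "A \<in> carrier_mat (Suc n) (Suc n)" unfolding A_def by simp
  have "det A = 0" unfolding A_def
    by (rule det_row_0) (auto simp: rw_def)
  then obtain u where u: "u \<in> carrier_vec (Suc n)" "u \<noteq> 0\<^sub>v (Suc n)" "A *\<^sub>v u = 0\<^sub>v (Suc n)"
    using det_0_iff_vec_prod_zero_field[OF Ac] by blast
  have rows: "(\<Sum>j<Suc n. c j k * u $ j) = 0" if k: "k < n" for k
  proof -
    have "(A *\<^sub>v u) $ k = 0" using u(3) k by simp
    moreover have "(A *\<^sub>v u) $ k = (\<Sum>j<Suc n. c j k * u $ j)"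
      using k u(1) unfolding A_def rw_def by (simp add: scalar_prod_def lessThan_atLeast0)
    ultimately show ?thesis by simp
  qed
  have "(\<Sum>j<Suc n. i (u $ j) * z j) = (\<Sum>j<Suc n. \<Sum>k<n. i (u $ j) * (i (c j k) * b k))"
    by (simp only: c sum_distrib_left)
  also have "\<dots> = (\<Sum>k<n. i (\<Sum>j<Suc n. c j k * u $ j) * b k)"
    by (subst sum.swap) (simp add: fe_sum[OF fe] fe_mult[OF fe] sum_distrib_right sum_distrib_left mult_ac del: sum.lessThan_Suc)
  also have "\<dots> = 0" using rows by (simp add: fe_zero[OF fe])
  finally have "(\<Sum>j<Suc n. i (u $ j) * z j) = 0" .
  moreover have "\<exists>j<Suc n. u $ j \<noteq> 0"
  proof (rule ccontr)
    assume "\<not> (\<exists>j<Suc n. u $ j \<noteq> 0)"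
    then have "u = 0\<^sub>v (Suc n)" using u(1) by (intro eq_vecI) auto
    then show False using u(2) by simp
  qed
  ultimately show ?thesis by blast
qed

definition nrm :: "'b \<Rightarrow> 'b" where "nrm x = (\<Prod>\<tau>\<in>Gal i. \<tau> x)"

lemma nrm_fixed: assumes r: "r \<in> Gal i" shows "r (nrm x) = nrm x"
proof -
  have "r (nrm x) = (\<Prod>\<tau>\<in>Gal i. r (\<tau> x))" unfolding nrm_def by (rule gal_prod[OF r cyc_fe[OF cyc]])
  also have "\<dots> = (\<Prod>\<tau>\<in>Gal i. (\<lambda>\<tau>. \<tau> x) (r \<circ> \<tau>))" by simp
  also have "\<dots> = nrm x" unfolding nrm_def by (rule prod_gal_shift[OF cyc r])
  finally show ?thesis .
qed

lemma nrm_in_F: "\<exists>a. nrm x = i a"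
  using fixed_in_F nrm_fixed by blast

lemma ext_norm_eq: "i (ext_norm i x) = nrm x"
proof -
  have fe: "field_emb i" using cyc_fe[OF cyc] .
  obtain a where a: "nrm x = i a" using nrm_in_F by blast
  have "(THE a. i a = (\<Prod>\<sigma>\<in>Gal i. \<sigma> x)) = a"
    by (rule the_equality) (use a fe_inj[OF fe] in \<open>auto simp: nrm_def\<close>)
  then show ?thesis unfolding ext_norm_def using a by simp
qed

lemma nrm_mult: "nrm (x * y) = nrm x * nrm y"
  unfolding nrm_def by (simp add: gal_mult prod.distrib)

lemma nrm_const: "nrm (i a) = i a ^ n"
  unfolding nrm_def using cyc_card[OF cyc] by (simp add: gal_fix)

lemma nrm_gal: "r \<in> Gal i \<Longrightarrow> nrm (r x) = nrm x"
  unfolding nrm_def using prod_gal_shift_right[OF cyc, of r "\<lambda>\<tau>. \<tau> x"] by simp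

lemma nrm_nonzero: "x \<noteq> 0 \<Longrightarrow> nrm x \<noteq> 0"
  unfolding nrm_def using cyc_finite[OF cyc] by simp

lemma nrm_gen: "nrm x = (\<Prod>k<n. (gen i ^^ k) x)"
  unfolding nrm_def by (rule prod_gal[OF cyc])

lemma ext_norm_mult: "ext_norm i (x * y) = ext_norm i x * ext_norm i y"
  using ext_norm_eq[of "x * y"] ext_norm_eq[of x] ext_norm_eq[of y] nrm_mult[of x y]
    fe_mult[OF cyc_fe[OF cyc]] fe_inj[OF cyc_fe[OF cyc]] by metis

lemma ext_norm_const: "ext_norm i (i a) = a ^ n"
  using ext_norm_eq[of "i a"] nrm_const[of a] fe_power[OF cyc_fe[OF cyc]] fe_inj[OF cyc_fe[OF cyc]] by metis

lemma hilbert90: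
  assumes z: "nrm z = 1"
  shows "\<exists>y. y \<noteq> 0 \<and> z = y / gen i y"
proof -
  let ?g = "\<lambda>j. gen i ^^ j"
  have gG: "?g j \<in> Gal i" for j using gal_funpow[OF gen_prop(1)[OF cyc]] .
  have G: "gen i \<in> Gal i" using gen_prop(1)[OF cyc] .
  have fe: "field_emb i" using cyc_fe[OF cyc] .
  define a where "a k = (\<Prod>j<k. ?g j z)" for k
  have "\<exists>x. (\<Sum>k<n. a k * ?g k x) \<noteq> 0"
  proof (rule ccontr)
    assume "\<not> (\<exists>x. (\<Sum>k<n. a k * ?g k x) \<noteq> 0)"
    then have "a 0 = 0" using dedekind_gen[of a 0] cyc_npos[OF cyc] by blast
    then show False by (simp add: a_def)
  qed
  then obtain \<theta> where th: "(\<Sum>k<n. a k * ?g k \<theta>) \<noteq> 0" by blast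
  define y where "y = (\<Sum>k<n. a k * ?g k \<theta>)"
  have ga: "z * gen i (a k) = a (Suc k)" for k
  proof -
    have "a (Suc k) = ?g 0 z * (\<Prod>j<k. ?g (Suc j) z)" unfolding a_def by (rule prod.lessThan_Suc_shift)
    moreover have "(\<Prod>j<k. ?g (Suc j) z) = gen i (a k)" unfolding a_def funpow.simps(2) o_def
      by (rule gal_prod[OF G fe, symmetric])
    ultimately show ?thesis by simp
  qed
  have "z * gen i y = (\<Sum>k<n. z * gen i (a k) * gen i (?g k \<theta>))"
    unfolding y_def using G by (simp add: gal_sum gal_mult sum_distrib_left mult.assoc)
  also have "\<dots> = (\<Sum>k<n. a (Suc k) * ?g (Suc k) \<theta>)" by (simp add: ga)
  also have "\<dots> = (\<Sum>k<Suc n. a k * ?g k \<theta>) - a 0 * ?g 0 \<theta>"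
    using sum.lessThan_Suc_shift[of "\<lambda>k. a k * ?g k \<theta>" n] by simp
  also have "(\<Sum>k<Suc n. a k * ?g k \<theta>) = y + a n * ?g n \<theta>"
    unfolding y_def by (rule sum.lessThan_Suc)
  also have "a n = 1" using z unfolding a_def nrm_gen .
  also have "?g n \<theta> = \<theta>" using gen_n[OF cyc] by simp
  also have "a 0 * ?g 0 \<theta> = \<theta>" by (simp add: a_def)
  finally have "z * gen i y = y" by simp
  moreover have "y \<noteq> 0" using th y_def by simp
  moreover have "gen i y \<noteq> 0" using \<open>y \<noteq> 0\<close> G by simp
  ultimately show ?thesis by (intro exI[of _ y]) (simp add: field_simps)
qed


end

lemma map_poly_add_hom:
  assumes "f 0 = 0" "\<And>x y. f (x + y) = f x + f y"
  shows "map_poly f (p + q) = map_poly f p + map_poly f q"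
  by (intro poly_eqI) (simp add: coeff_map_poly assms)

lemma map_poly_mult_hom:
  fixes f :: "'a::comm_ring_1 \<Rightarrow> 'b::comm_ring_1"
  assumes z: "f 0 = 0" and a: "\<And>x y. f (x + y) = f x + f y" and m: "\<And>x y. f (x * y) = f x * f y"
  shows "map_poly f (p * q) = map_poly f p * map_poly f q"
proof (induction p)
  case 0 then show ?case by simp
next
  case (pCons c p)
  have "map_poly f (pCons c p * q) = map_poly f (Polynomial.smult c q) + map_poly f (pCons 0 (p * q))"
    by (simp add: map_poly_add_hom[OF z a])
  also have "\<dots> = Polynomial.smult (f c) (map_poly f q) + pCons 0 (map_poly f p * map_poly f q)"
    by (simp add: map_poly_smult[OF z m] map_poly_pCons[of f, OF z] z pCons.IH)
  also have "\<dots> = map_poly f (pCons c p) * map_poly f q"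
    by (simp add: map_poly_pCons[of f, OF z])
  finally show ?case .
qed

lemma map_poly_one_hom: "f 0 = 0 \<Longrightarrow> f 1 = 1 \<Longrightarrow> map_poly f 1 = 1"
  by (simp add: one_pCons map_poly_pCons)

lemma map_poly_prod_hom:
  fixes f :: "'a::comm_ring_1 \<Rightarrow> 'b::comm_ring_1"
  assumes z: "f 0 = 0" and o: "f 1 = 1" and a: "\<And>x y. f (x + y) = f x + f y" and m: "\<And>x y. f (x * y) = f x * f y"
  shows "map_poly f (prod g J) = (\<Prod>j\<in>J. map_poly f (g j))"
  by (induction J rule: infinite_finite_induct)
     (simp_all add: map_poly_one_hom[OF z o] map_poly_mult_hom[OF z a m])

context
  fixes i :: "'a::field \<Rightarrow> 'b::field" and n :: nat
  assumes cyc: "cyclic_ext i n"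
begin

definition PN :: "'b poly \<Rightarrow> 'b poly" where "PN g = (\<Prod>\<tau>\<in>Gal i. map_poly \<tau> g)"

lemma gal_map_mult: "r \<in> Gal i \<Longrightarrow> map_poly r (p * q) = map_poly r p * map_poly r q"
  by (rule map_poly_mult_hom) (simp_all add: gal_add gal_mult)

lemma gal_map_comp: "r \<in> Gal i \<Longrightarrow> t \<in> Gal i \<Longrightarrow> map_poly r (map_poly t g) = map_poly (r \<circ> t) g"
  by (rule map_poly_map_poly) simp_all

lemma PN_fixed: assumes r: "r \<in> Gal i" shows "map_poly r (PN g) = PN g"
proof -
  have fe: "field_emb i" using cyc_fe[OF cyc] .
  have "map_poly r (PN g) = (\<Prod>\<tau>\<in>Gal i. map_poly r (map_poly \<tau> g))" unfolding PN_def
    by (rule map_poly_prod_hom) (use r fe in \<open>simp_all add: gal_add gal_mult gal_one\<close>)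
  also have "\<dots> = (\<Prod>\<tau>\<in>Gal i. (\<lambda>\<tau>. map_poly \<tau> g) (r \<circ> \<tau>))"
    by (intro prod.cong refl) (simp add: gal_map_comp[OF r])
  also have "\<dots> = PN g" unfolding PN_def by (rule prod_gal_shift[OF cyc r])
  finally show ?thesis .
qed

lemma PN_in_F: "\<exists>Q. PN g = map_poly i Q"
proof -
  have fe: "field_emb i" using cyc_fe[OF cyc] .
  define P where "P = PN g"
  define h where "h c = (SOME a. c = i a)" for c
  have h0: "h 0 = 0" unfolding h_def by (rule some_equality) (use fe_eq0[OF fe] in auto)
  have hc: "i (h (coeff P k)) = coeff P k" for k
  proof -
    have "\<exists>a. coeff P k = i a"
    proof (rule fixed_in_F[OF cyc])
      fix \<tau> assume t: "\<tau> \<in> Gal i"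
      have "\<tau> (coeff P k) = coeff (map_poly \<tau> P) k" using t by (simp add: coeff_map_poly)
      also have "\<dots> = coeff P k" unfolding P_def using PN_fixed[OF t] by simp
      finally show "\<tau> (coeff P k) = coeff P k" .
    qed
    then have "coeff P k = i (h (coeff P k))" unfolding h_def by (rule someI_ex)
    then show ?thesis by simp
  qed
  have "P = map_poly i (map_poly h P)"
    by (intro poly_eqI) (simp add: coeff_map_poly h0 hc fe_zero[OF fe])
  then show ?thesis unfolding P_def by blast
qed

lemma map_poly_i_inj: "map_poly i P = map_poly i Q \<Longrightarrow> P = Q"
proof (intro poly_eqI)
  fix k assume "map_poly i P = map_poly i Q"
  then have "coeff (map_poly i P) k = coeff (map_poly i Q) k" by simp
  then show "coeff P k = coeff Q k"
    using fe_inj[OF cyc_fe[OF cyc]] by (simp add: coeff_map_poly fe_zero[OF cyc_fe[OF cyc]])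
qed

lemma poly_norm_eq: "map_poly i (poly_norm i g) = PN g"
proof -
  obtain Q where Q: "PN g = map_poly i Q" using PN_in_F by blast
  have "(THE P. map_poly i P = (\<Prod>\<sigma>\<in>Gal i. map_poly \<sigma> g)) = Q"
    by (rule the_equality) (use Q map_poly_i_inj in \<open>auto simp: PN_def\<close>)
  then show ?thesis unfolding poly_norm_def using Q by simp
qed

lemma map_i_mult: "map_poly i (p * q) = map_poly i p * map_poly i q"
  by (rule map_poly_mult_hom) (simp_all add: fe_add[OF cyc_fe[OF cyc]] fe_mult[OF cyc_fe[OF cyc]] fe_zero[OF cyc_fe[OF cyc]])

lemma map_i_power: "map_poly i (p ^ k) = map_poly i p ^ k"
  by (induction k) (simp_all add: map_i_mult map_poly_one_hom fe_zero[OF cyc_fe[OF cyc]] fe_one[OF cyc_fe[OF cyc]])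

lemma PN_const_mult: "PN (map_poly i C * Y) = map_poly i C ^ n * PN Y"
proof -
  have fe: "field_emb i" using cyc_fe[OF cyc] .
  have "map_poly \<tau> (map_poly i C * Y) = map_poly i C * map_poly \<tau> Y" if t: "\<tau> \<in> Gal i" for \<tau>
  proof -
    have "map_poly \<tau> (map_poly i C) = map_poly (\<tau> \<circ> i) C" by (rule map_poly_map_poly) (simp_all add: gal_zero[OF t] fe_zero[OF fe])
    also have "\<tau> \<circ> i = i" using gal_fix[OF t] by auto
    finally show ?thesis using gal_map_mult[OF t] by simp
  qed
  then have "PN (map_poly i C * Y) = (\<Prod>\<tau>\<in>Gal i. map_poly i C * map_poly \<tau> Y)" unfolding PN_def
    by (intro prod.cong) auto
  also have "\<dots> = map_poly i C ^ n * PN Y" unfolding PN_def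
    by (simp add: prod.distrib cyc_card[OF cyc])
  finally show ?thesis .
qed

lemma PN_gal: assumes r: "r \<in> Gal i" shows "PN (map_poly r Y) = PN Y"
proof -
  have "PN (map_poly r Y) = (\<Prod>\<tau>\<in>Gal i. (\<lambda>\<tau>. map_poly \<tau> Y) (\<tau> \<circ> r))" unfolding PN_def
    by (intro prod.cong refl) (simp add: gal_map_comp[OF _ r])
  also have "\<dots> = PN Y" unfolding PN_def by (rule prod_gal_shift_right[OF cyc r])
  finally show ?thesis .
qed

lemma poly_norm_const_mult: "poly_norm i (map_poly i C * Y) = C ^ n * poly_norm i Y"
proof (rule map_poly_i_inj)
  show "map_poly i (poly_norm i (map_poly i C * Y)) = map_poly i (C ^ n * poly_norm i Y)"
    unfolding poly_norm_eq map_i_mult map_i_power PN_const_mult ..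
qed

lemma poly_norm_gal: "r \<in> Gal i \<Longrightarrow> poly_norm i (map_poly r Y) = poly_norm i Y"
  by (rule map_poly_i_inj) (simp add: poly_norm_eq PN_gal)

end




context
  fixes v :: "'a::field \<Rightarrow> int" and w :: "'b::field \<Rightarrow> int" and i :: "'a \<Rightarrow> 'b"
    and n :: nat and e :: int
  assumes dvv: "discrete_valuation v" and cpl: "complete_wrt v" and cyc: "cyclic_ext i n"
    and dvw: "discrete_valuation w" and epos: "e > 0" and ext: "\<And>a. a \<noteq> 0 \<Longrightarrow> w (i a) = e * v a"
begin

lemma gal_val: assumes t: "\<tau> \<in> Gal i" and x: "x \<noteq> 0" shows "w (\<tau> x) = w x"
proof -
  have fe: "field_emb i" using cyc_fe[OF cyc] .
  have b: "bij \<tau>" using gal_bij[OF t] .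
  have dv': "discrete_valuation (w \<circ> \<tau>)"
    unfolding discrete_valuation_def
  proof (intro conjI allI impI)
    fix x y :: 'b assume "x \<noteq> 0" "y \<noteq> 0"
    then show "(w \<circ> \<tau>) (x * y) = (w \<circ> \<tau>) x + (w \<circ> \<tau>) y"
      using t by (simp add: gal_mult dv_mult[OF dvw])
  next
    fix x y :: 'b assume "x \<noteq> 0" "y \<noteq> 0" "x + y \<noteq> 0"
    then show "min ((w \<circ> \<tau>) x) ((w \<circ> \<tau>) y) \<le> (w \<circ> \<tau>) (x + y)"
      using t dv_ultra[OF dvw, of "\<tau> x" "\<tau> y"] by (simp add: gal_add[OF t, symmetric])
  next
    fix m :: int
    obtain z where z: "z \<noteq> 0" "w z = m" using dv_surj[OF dvw] by blast
    have "\<tau> (inv_into UNIV \<tau> z) = z" using b by (simp add: bij_is_surj surj_f_inv_f)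
    moreover then have "inv_into UNIV \<tau> z \<noteq> 0" using z t by (metis gal_zero)
    ultimately show "\<exists>x. x \<noteq> 0 \<and> (w \<circ> \<tau>) x = m" using z by (intro exI[of _ "inv_into UNIV \<tau> z"]) simp
  qed
  have ext': "(w \<circ> \<tau>) (i a) = e * v a" if "a \<noteq> 0" for a using gal_fix[OF t] ext[OF that] by simp
  show ?thesis
    using val_unique[of v i n w "w \<circ> \<tau>" e x] dvv cpl fe cyc_deg[OF cyc] dvw dv' epos ext ext' x by simp
qed

lemma nrm_val: assumes x: "x \<noteq> 0" shows "w (nrm i x) = int n * w x"
proof -
  have "nrm i x = (\<Prod>\<tau>\<in>Gal i. \<tau> x)" by (simp add: nrm_def[OF cyc])
  also have "w \<dots> = (\<Sum>\<tau>\<in>Gal i. w (\<tau> x))"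
    by (rule dv_prod[OF dvw cyc_finite[OF cyc]]) (use x in simp)
  finally have "w (nrm i x) = (\<Sum>\<tau>\<in>Gal i. w (\<tau> x))" .
  also have "\<dots> = (\<Sum>\<tau>\<in>Gal i. w x)" by (intro sum.cong refl) (simp add: gal_val x)
  also have "\<dots> = int n * w x" using cyc_card[OF cyc] by simp
  finally show ?thesis .
qed

lemma ext_norm_val: assumes x: "x \<noteq> 0" shows "e * v (ext_norm i x) = int n * w x"
proof -
  have ne: "ext_norm i x \<noteq> 0"
    using ext_norm_eq[OF cyc, of x] nrm_nonzero[OF cyc x] fe_zero[OF cyc_fe[OF cyc]] by auto
  have "e * v (ext_norm i x) = w (i (ext_norm i x))" using ext[OF ne] by simp
  also have "\<dots> = int n * w x" using ext_norm_eq[OF cyc, of x] nrm_val[OF x] by simp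
  finally show ?thesis .
qed


end

lemma gev_one_unit:
  assumes dv: "discrete_valuation w" and t: "gev w 1 (x - 1)" shows "gev w 0 x"
proof -
  have "gev w 0 (1 + (x - 1))"
    using gev_add[OF dv, of 0 1 "x - 1"] gev_mono[OF _ t] by (simp add: gev_def dv_one[OF dv])
  then show ?thesis by simp
qed

lemma gev_prod_one:
  assumes dv: "discrete_valuation w" and t: "\<And>j. j \<in> J \<Longrightarrow> gev w 1 (t j)"
  shows "gev w 1 ((\<Prod>j\<in>J. (1 + t j)) - 1)"
  using t
proof (induction J rule: infinite_finite_induct)
  case (insert x F)
  let ?P = "\<Prod>j\<in>F. (1 + t j)"
  have IH: "gev w 1 (?P - 1)" using insert by simp
  have P0: "gev w 0 ?P" using gev_one_unit[OF dv IH] .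
  have "gev w (1 + 0) (t x * ?P)" using gev_mult[OF dv insert.prems[of x] P0] by simp
  then have "gev w 1 (t x * ?P + (?P - 1))" using gev_add[OF dv _ IH] by simp
  moreover have "(1 + t x) * ?P - 1 = t x * ?P + (?P - 1)" by (simp add: algebra_simps)
  ultimately show ?case using insert by (simp add: add_diff_eq)
qed simp_all

lemma distinct_val_sum:
  fixes w :: "'b::field \<Rightarrow> int"
  assumes dv: "discrete_valuation w" and J: "J \<subseteq> {..<n}"
    and md: "\<And>j. j \<in> J \<Longrightarrow> f j \<noteq> 0 \<Longrightarrow> w (f j) mod int n = int j"
    and s0: "sum f J = 0"
  shows "\<forall>j\<in>J. f j = 0"
proof (rule ccontr)
  assume "\<not> (\<forall>j\<in>J. f j = 0)"
  define J' where "J' = {j\<in>J. f j \<noteq> 0}"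
  have fJ: "finite J" using J finite_subset by blast
  have fJ': "finite J'" using fJ unfolding J'_def by simp
  have ne: "J' \<noteq> {}" using \<open>\<not> (\<forall>j\<in>J. f j = 0)\<close> unfolding J'_def by blast
  define m where "m = Min ((\<lambda>j. w (f j)) ` J')"
  have "m \<in> (\<lambda>j. w (f j)) ` J'" unfolding m_def using fJ' ne by (intro Min_in) auto
  then obtain j0 where j0: "j0 \<in> J'" "w (f j0) = m" by blast
  have others: "gev w (m + 1) (f j)" if "j \<in> J - {j0}" for j
  proof (cases "f j = 0")
    case False
    then have jJ': "j \<in> J'" using that unfolding J'_def by simp
    have "m \<le> w (f j)" unfolding m_def using fJ' jJ' by (intro Min_le) auto
    moreover have "w (f j) \<noteq> m"
    proof
      assume "w (f j) = m"
      then have "int j = int j0" using md[of j] md[of j0] j0 jJ' unfolding J'_def by auto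
      then show False using that by simp
    qed
    ultimately show ?thesis using False by (simp add: gev_def)
  qed simp
  have "gev w (m + 1) (sum f (J - {j0}))" by (rule gev_sum[OF dv]) (rule others)
  moreover have "f j0 \<noteq> 0" "j0 \<in> J" using j0 unfolding J'_def by auto
  ultimately have "f j0 + sum f (J - {j0}) \<noteq> 0" using dv_strict[OF dv, of "f j0"] j0(2) by simp
  moreover have "sum f J = f j0 + sum f (J - {j0})" using fJ \<open>j0 \<in> J\<close> by (simp add: sum.remove)
  ultimately show False using s0 by simp
qed

context
  fixes v :: "'a::field \<Rightarrow> int" and w :: "'b::field \<Rightarrow> int" and i :: "'a \<Rightarrow> 'b"
    and n :: nat and e :: int
  assumes dvv: "discrete_valuation v" and cpl: "complete_wrt v" and cyc: "cyclic_ext i n"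
    and dvw: "discrete_valuation w" and en: "e = int n" and ext: "\<And>a. a \<noteq> 0 \<Longrightarrow> w (i a) = e * v a"
begin

lemma residue:
  assumes y: "y \<noteq> 0" "w y = 0"
  shows "\<exists>c. y = i c \<or> gev w 1 (y - i c)"
proof (rule ccontr)
  assume "\<not> ?thesis"
  then have H: "y \<noteq> i c" "\<not> gev w 1 (y - i c)" for c by auto
  have fe: "field_emb i" using cyc_fe[OF cyc] .
  have npos: "n > 0" using cyc_npos[OF cyc] .
  have wi: "w (i a) = int n * v a" if "a \<noteq> 0" for a using ext[OF that] en by simp
  obtain P where P: "P \<noteq> 0" "w P = 1" using dv_surj[OF dvw] by blast
  define z where "z j = (if j < n then P ^ j else y)" for j
  obtain l where l: "\<exists>j<Suc n. l j \<noteq> 0" "(\<Sum>j<Suc n. i (l j) * z j) = 0"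
    using dependent_Suc[OF cyc, of z] by blast
  define f where "f j = i (l j) * P ^ j + (if j = 0 then i (l n) * y else 0)" for j
  have "(\<Sum>j<n. f j) = (\<Sum>j<n. i (l j) * P ^ j) + (\<Sum>j<n. (if j = 0 then i (l n) * y else 0))"
    unfolding f_def by (simp add: sum.distrib)
  also have "(\<Sum>j<n. (if j = 0 then i (l n) * y else 0)) = i (l n) * y"
    using npos by (simp add: sum.delta)
  also have "(\<Sum>j<n. i (l j) * P ^ j) = (\<Sum>j<n. i (l j) * z j)" unfolding z_def by simp
  also have "(\<Sum>j<n. i (l j) * z j) + i (l n) * y = (\<Sum>j<Suc n. i (l j) * z j)" by (simp add: z_def)
  finally have s0: "(\<Sum>j<n. f j) = 0" using l(2) by simp
  have md: "w (f j) mod int n = int j" if j: "j \<in> {..<n}" and fj: "f j \<noteq> 0" for j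
  proof (cases "j = 0")
    case False
    then have fj': "f j = i (l j) * P ^ j" unfolding f_def by simp
    then have lj: "l j \<noteq> 0" using fj by (auto simp: fe_zero[OF fe])
    have "w (f j) = int n * v (l j) + int j"
      unfolding fj' using dv_mult[OF dvw, of "i (l j)" "P ^ j"] lj P dv_power[OF dvw P(1)] wi[OF lj]
        fe_eq0[OF fe] by simp
    then show ?thesis using j by simp
  next
    case True
    then have fj': "f 0 = i (l 0) + i (l n) * y" unfolding f_def by simp
    show ?thesis
    proof (cases "l n = 0")
      case True
      then have "f 0 = i (l 0)" using fj' by (simp add: fe_zero[OF fe])
      moreover then have "l 0 \<noteq> 0" using fj \<open>j = 0\<close> by (auto simp: fe_zero[OF fe])
      ultimately show ?thesis using wi \<open>j = 0\<close> by simp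
    next
      case False
      define c where "c = - (l 0 / l n)"
      have fc: "f 0 = i (l n) * (y - i c)"
        unfolding fj' c_def using False by (simp add: fe_uminus[OF fe] fe_divide[OF fe] algebra_simps fe_eq0[OF fe])
      have yc: "y - i c \<noteq> 0" using H(1)[of c] by simp
      have q1: "w (y - i c) \<le> 0" using H(2)[of c] yc by (simp add: gev_def)
      have q: "w (y - i c) mod int n = 0"
      proof (cases "c = 0")
        case True then show ?thesis using y by (simp add: fe_zero[OF fe])
      next
        case c0: False
        show ?thesis
        proof (cases "v c < 0")
          case True
          have wc: "w (- i c) = int n * v c" using wi[OF c0] dv_uminus[OF dvw] by simp
          have "int n * v c \<le> int n * (-1)" using True by (intro mult_left_mono) auto
          then have "int n * v c + 1 \<le> 0" using npos by linarith
          then have "gev w (w (- i c) + 1) y" using y wc by (simp add: gev_def)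
          then have "w (- i c + y) = w (- i c)" using dv_strict[OF dvw, of "- i c" y] c0 fe_eq0[OF fe] by simp
          then have "w (y - i c) = int n * v c" using wc by (simp add: add.commute)
          then show ?thesis by simp
        next
          case False
          have "gev w 0 (i c)" using wi[OF c0] False by (simp add: gev_def)
          moreover have "gev w 0 y" using y by (simp add: gev_def)
          ultimately have "gev w 0 (y - i c)" using gev_diff[OF dvw] by blast
          then have "w (y - i c) = 0" using q1 yc by (simp add: gev_def)
          then show ?thesis by simp
        qed
      qed
      have "w (f 0) = int n * v (l n) + w (y - i c)"
        unfolding fc using dv_mult[OF dvw _ yc, of "i (l n)"] False wi fe_eq0[OF fe] by simp
      then show ?thesis using q \<open>j = 0\<close> by simp
    qed
  qed
  have all0: "\<forall>j\<in>{..<n}. f j = 0"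
    by (rule distinct_val_sum[OF dvw subset_refl]) (use md s0 in auto)
  have lj: "l j = 0" if "0 < j" "j < n" for j
  proof -
    have "f j = i (l j) * P ^ j" unfolding f_def using that by simp
    then show ?thesis using all0 that P(1) fe_eq0[OF fe] by auto
  qed
  have ln: "l n = 0"
  proof (rule ccontr)
    assume ln: "l n \<noteq> 0"
    have "i (l 0) + i (l n) * y = 0" using bspec[OF all0, of 0] npos unfolding f_def by simp
    then have e1: "i (l n) * y = - i (l 0)" by (simp add: add_eq_0_iff add.commute)
    have iln: "i (l n) \<noteq> 0" using ln fe_eq0[OF fe] by simp
    have "y = (i (l n) * y) / i (l n)" using iln by simp
    also have "\<dots> = - i (l 0) / i (l n)" by (simp only: e1)
    also have "\<dots> = i (- (l 0 / l n))" by (simp add: fe_uminus[OF fe] fe_divide[OF fe])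
    finally have "y = i (- (l 0 / l n))" .
    then show False using H(1) by blast
  qed
  have l0: "l 0 = 0"
  proof -
    have "i (l 0) + i (l n) * y = 0" using bspec[OF all0, of 0] npos unfolding f_def by simp
    then show ?thesis using ln by (simp add: fe_zero[OF fe] fe_eq0[OF fe])
  qed
  have "l j = 0" if jn: "j < Suc n" for j
  proof -
    consider "j = 0" | "0 < j \<and> j < n" | "j = n" using jn by linarith
    then show ?thesis using lj ln l0 by cases auto
  qed
  then show False using l(1) by blast
qed

end




lemma poly_lin: "poly [:1, q:] t = 1 + t * q" by simp

theorem mainTheorem16:
  fixes v :: "'a::field \<Rightarrow> int"
    and i1 :: "'a \<Rightarrow> 'b::field"
    and i2 :: "'a \<Rightarrow> 'c::field"
    and p :: nat
  assumes "discrete_valuation v" and "complete_wrt v"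
    and "prime p" and "residue_char_neq v p"
    and "cyclic_ext i1 p" and "unramified_ext v i1"
    and "cyclic_ext i2 p" and "ramified_ext v i2"
  shows "\<forall>x \<in> multinorm_torus i1 i2. R_equiv i1 i2 (1, 1) x"
proof
  fix x assume x: "x \<in> multinorm_torus i1 i2"
  note dvv = assms(1) and cpl = assms(2) and cyc1 = assms(5) and cyc2 = assms(7)
  have fe1: "field_emb i1" using cyc_fe[OF cyc1] .
  have fe2: "field_emb i2" using cyc_fe[OF cyc2] .
  obtain x1 x2 where xx: "x = (x1, x2)" "x1 \<noteq> 0" "x2 \<noteq> 0" "ext_norm i1 x1 * ext_norm i2 x2 = 1"
    using x unfolding multinorm_torus_def by auto
  have p2: "p \<ge> 2" using prime_ge_2_nat[OF assms(3)] .
  obtain w1 where w1: "discrete_valuation w1" "\<And>a. a \<noteq> 0 \<Longrightarrow> w1 (i1 a) = 1 * v a"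
    using assms(6) unfolding unramified_ext_def by auto
  obtain w2 e where w2: "discrete_valuation w2" "e > 1" "\<And>a. a \<noteq> 0 \<Longrightarrow> w2 (i2 a) = e * v a"
    using assms(8) unfolding ramified_ext_def by auto
  have p0: "(of_nat p :: 'a) \<noteq> 0" using assms(4) unfolding residue_char_neq_def max_ideal_def by auto
  have vp: "v (of_nat p) = 0"
  proof -
    have "\<not> 0 < v (of_nat p)" using assms(4) unfolding residue_char_neq_def max_ideal_def by auto
    moreover have "0 \<le> v (of_nat p)" using gev_of_nat[OF dvv, of p] p0 by (simp add: gev_def)
    ultimately show ?thesis by simp
  qed
  have ep: "e = int p"
  proof -
    obtain P where P: "P \<noteq> 0" "w2 P = 1" using dv_surj[OF w2(1)] by blast
    have eq: "e * v (ext_norm i2 P) = int p * 1"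
      using ext_norm_val[OF dvv cpl cyc2 w2(1) _ w2(3) P(1)] w2(2) P(2) by simp
    define q where "q = v (ext_norm i2 P)"
    have q0: "q > 0"
    proof (rule ccontr)
      assume "\<not> q > 0"
      then have "e * q \<le> 0" using w2(2) by (intro mult_nonneg_nonpos) auto
      then show False using eq p2 unfolding q_def by simp
    qed
    have "p = nat e * nat q" using eq w2(2) q0 unfolding q_def by (simp add: nat_mult_distrib[symmetric])
    then have "nat e dvd p" by simp
    then have "nat e = 1 \<or> nat e = p" using assms(3) unfolding prime_nat_iff by blast
    then show ?thesis using w2(2) by auto
  qed
  have ext2: "w2 (i2 a) = int p * v a" if "a \<noteq> 0" for a using w2(3)[OF that] ep by simp
  have pp: "int p > 0" using p2 by simp
  define a where "a = ext_norm i1 x1"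
  define b where "b = ext_norm i2 x2"
  have ab: "a * b = 1" using xx(4) unfolding a_def b_def .
  have a0: "a \<noteq> 0" and b0: "b \<noteq> 0" using ab by auto
  have va: "1 * v a = int p * w1 x1"
    unfolding a_def using ext_norm_val[OF dvv cpl cyc1 w1(1) _ w1(2) xx(2)] by simp
  have vb: "v b = w2 x2"
    using ext_norm_val[OF dvv cpl cyc2 w2(1) pp ext2 xx(3)] pp unfolding b_def by simp
  have vab: "v a + v b = 0" using dv_mult[OF dvv a0 b0] ab dv_one[OF dvv] by simp
  obtain ck where ck: "ck \<noteq> 0" "v ck = w1 x1" using dv_surj[OF dvv] by blast
  define y where "y = x2 * i2 ck"
  have y0: "y \<noteq> 0" unfolding y_def using xx(3) ck fe_eq0[OF fe2] by simp
  have wy: "w2 y = 0"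
    unfolding y_def using dv_mult[OF w2(1) xx(3), of "i2 ck"] ck fe_eq0[OF fe2] ext2[OF ck(1)] vb va vab
    by simp
  obtain c0 where c0: "y = i2 c0 \<or> gev w2 1 (y - i2 c0)"
    using residue[OF dvv cpl cyc2 w2(1) refl ext2 y0 wy] by blast
  have yc: "gev w2 1 (y - i2 c0)" using c0 by auto
  have c00: "c0 \<noteq> 0"
  proof
    assume "c0 = 0"
    then have "gev w2 1 y" using yc by (simp add: fe_zero[OF fe2])
    then show False using wy y0 by (simp add: gev_def)
  qed
  have ic0: "i2 c0 \<noteq> 0" using c00 fe_eq0[OF fe2] by simp
  define m where "m = (y - i2 c0) / i2 c0"
  have wic0: "w2 (inverse (i2 c0)) = 0"
  proof -
    have "w2 (i2 c0) = int p * v c0" using ext2[OF c00] .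
    have "gev w2 1 (- (y - i2 c0))" by (subst gev_uminus[OF w2(1)]) (rule yc)
    then have "gev w2 (w2 y + 1) (- (y - i2 c0))" using wy by (simp only: add_0)
    then have "w2 (y + - (y - i2 c0)) = w2 y" using dv_strict[OF w2(1) y0] by blast
    then have "w2 (i2 c0) = 0" using wy by simp
    then show ?thesis using dv_inverse[OF w2(1) ic0] by simp
  qed
  have m1: "gev w2 1 m"
  proof -
    have "gev w2 (1 + 0) ((y - i2 c0) * inverse (i2 c0))"
      by (rule gev_mult[OF w2(1) yc]) (simp add: gev_def wic0)
    then show ?thesis unfolding m_def by (simp add: divide_inverse)
  qed
  have ym: "y = i2 c0 * (1 + m)" unfolding m_def using ic0 by (simp add: field_simps)
  define d where "d = ext_norm i2 (1 + m)"
  have G2: "gen i2 \<in> Gal i2" using gen_prop(1)[OF cyc2] .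
  have G1: "gen i1 \<in> Gal i1" using gen_prop(1)[OF cyc1] .
  have nd: "nrm i2 (1 + m) = (\<Prod>\<tau>\<in>Gal i2. (1 + \<tau> m))"
    unfolding nrm_def[OF cyc2] by (intro prod.cong refl) (simp add: gal_add gal_one fe2)
  have "gev w2 1 (\<tau> m)" if t: "\<tau> \<in> Gal i2" for \<tau>
  proof (cases "m = 0")
    case False
    then show ?thesis using gal_val[OF dvv cpl cyc2 w2(1) pp ext2 t False] m1 t by (simp add: gev_def)
  qed (simp add: gal_zero[OF t])
  then have "gev w2 1 (nrm i2 (1 + m) - 1)" unfolding nd by (rule gev_prod_one[OF w2(1)])
  then have "gev w2 1 (i2 (d - 1))" unfolding d_def using ext_norm_eq[OF cyc2] fe_diff[OF fe2] fe_one[OF fe2] by simp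
  then have d1: "gev v 1 (d - 1)"
  proof (cases "d - 1 = 0")
    case False
    assume "gev w2 1 (i2 (d - 1))"
    then have "1 \<le> int p * v (d - 1)" using ext2[OF False] False fe_eq0[OF fe2] by (simp add: gev_def)
    have "v (d - 1) > 0"
    proof (rule ccontr)
      assume "\<not> v (d - 1) > 0"
      then have "int p * v (d - 1) \<le> 0" using pp by (intro mult_nonneg_nonpos) auto
      then show False using \<open>1 \<le> int p * v (d - 1)\<close> by simp
    qed
    then show ?thesis by (simp add: gev_def)
  qed simp
  obtain r where r: "r ^ p = d" using hensel_root[OF dvv cpl _ p0 vp d1] p2 by auto
  have "ext_norm i2 y = c0 ^ p * d"
    unfolding ym d_def using ext_norm_mult[OF cyc2] ext_norm_const[OF cyc2] by simp
  moreover have "ext_norm i2 y = b * ck ^ p"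
    unfolding y_def b_def using ext_norm_mult[OF cyc2] ext_norm_const[OF cyc2] by simp
  ultimately have bc: "b * ck ^ p = (c0 * r) ^ p" using r by (simp add: power_mult_distrib)
  have r0: "r \<noteq> 0"
  proof
    assume "r = 0"
    then have "b * ck ^ p = 0" using bc p2 by simp
    then show False using b0 ck by simp
  qed
  define c where "c = ck / (c0 * r)"
  have cne: "c \<noteq> 0" unfolding c_def using ck c00 r0 by simp
  have ac: "a = c ^ p"
  proof -
    have "a = 1 / b" using ab b0 by (simp add: field_simps)
    also have "\<dots> = ck ^ p / (c0 * r) ^ p" using bc b0 ck(1) c00 r0 by (simp add: field_simps)
    also have "\<dots> = c ^ p" unfolding c_def by (simp add: power_divide)
    finally show ?thesis .
  qed
  define x1' where "x1' = x1 * i1 (inverse c)"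
  define x2' where "x2' = x2 * i2 c"
  have "ext_norm i1 x1' = a * inverse c ^ p"
    unfolding x1'_def a_def using ext_norm_mult[OF cyc1] ext_norm_const[OF cyc1] by simp
  then have "ext_norm i1 x1' = 1" using ac cne by (simp add: power_inverse[symmetric] field_simps)
  then have n1: "nrm i1 x1' = 1" using ext_norm_eq[OF cyc1, of x1'] fe_one[OF fe1] by simp
  have "ext_norm i2 x2' = b * c ^ p"
    unfolding x2'_def b_def using ext_norm_mult[OF cyc2] ext_norm_const[OF cyc2] by simp
  then have "ext_norm i2 x2' = 1" using ac ab by (simp add: mult.commute)
  then have n2: "nrm i2 x2' = 1" using ext_norm_eq[OF cyc2, of x2'] fe_one[OF fe2] by simp
  obtain y1 where y1: "y1 \<noteq> 0" "x1' = y1 / gen i1 y1" using hilbert90[OF cyc1 n1] by blast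
  obtain y2 where y2: "y2 \<noteq> 0" "x2' = y2 / gen i2 y2" using hilbert90[OF cyc2 n2] by blast
  have sy1: "gen i1 y1 \<noteq> 0" using y1 G1 by simp
  have sy2: "gen i2 y2 \<noteq> 0" using y2 G2 by simp
  define C where "C = [:1, c - 1:]"
  define Y1 where "Y1 = [:1, y1 - 1:]"
  define Y2 where "Y2 = [:1, y2 - 1:]"
  have mC1: "map_poly i1 C = [:1, i1 c - 1:]"
    unfolding C_def by (simp add: map_poly_pCons fe_zero[OF fe1] fe_one[OF fe1] fe_diff[OF fe1])
  have mC2: "map_poly i2 C = [:1, i2 c - 1:]"
    unfolding C_def by (simp add: map_poly_pCons fe_zero[OF fe2] fe_one[OF fe2] fe_diff[OF fe2])
  have mY1: "map_poly (gen i1) Y1 = [:1, gen i1 y1 - 1:]"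
    unfolding Y1_def using G1 by (simp add: map_poly_pCons gal_one[OF G1 fe1] gal_diff)
  have mY2: "map_poly (gen i2) Y2 = [:1, gen i2 y2 - 1:]"
    unfolding Y2_def using G2 by (simp add: map_poly_pCons gal_one[OF G2 fe2] gal_diff)
  define g1 where "g1 = map_poly i1 C * Y1"
  define h1 where "h1 = map_poly (gen i1) Y1"
  define g2 where "g2 = Y2"
  define h2 where "h2 = map_poly i2 C * map_poly (gen i2) Y2"
  have norm_eq: "poly_norm i1 g1 * poly_norm i2 g2 = poly_norm i1 h1 * poly_norm i2 h2"
  proof -
    have a1: "poly_norm i1 g1 = C ^ p * poly_norm i1 Y1" unfolding g1_def by (rule poly_norm_const_mult[OF cyc1])
    have a2: "poly_norm i1 h1 = poly_norm i1 Y1" unfolding h1_def by (rule poly_norm_gal[OF cyc1 G1])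
    have a3: "poly_norm i2 h2 = C ^ p * poly_norm i2 (map_poly (gen i2) Y2)" unfolding h2_def
      by (rule poly_norm_const_mult[OF cyc2])
    have a4: "poly_norm i2 (map_poly (gen i2) Y2) = poly_norm i2 Y2" by (rule poly_norm_gal[OF cyc2 G2])
    show ?thesis unfolding a1 a2 a3 a4 g2_def by (simp only: mult_ac)
  qed
  have v0: "poly g1 0 = 1" "poly h1 0 = 1" "poly g2 0 = 1" "poly h2 0 = 1"
    unfolding g1_def h1_def g2_def h2_def mC1 mC2 mY1 mY2 by (simp_all add: Y1_def Y2_def)
  have v1: "poly g1 1 = i1 c * y1" "poly h1 1 = gen i1 y1" "poly g2 1 = y2" "poly h2 1 = i2 c * gen i2 y2"
    unfolding g1_def h1_def g2_def h2_def mC1 mC2 mY1 mY2 by (simp_all add: Y1_def Y2_def algebra_simps)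
  have ic1: "i1 c \<noteq> 0" using cne fe_eq0[OF fe1] by simp
  have ic2: "i2 c \<noteq> 0" using cne fe_eq0[OF fe2] by simp
  have X1: "x1 = i1 c * y1 / gen i1 y1"
  proof -
    have "x1 * inverse (i1 c) = y1 / gen i1 y1" using y1(2) unfolding x1'_def by (simp add: fe_inverse[OF fe1])
    then show ?thesis using ic1 by (simp add: field_simps)
  qed
  have X2: "x2 = y2 / (i2 c * gen i2 y2)"
  proof -
    have "x2 * i2 c = y2 / gen i2 y2" using y2(2) unfolding x2'_def .
    then show ?thesis using ic2 sy2 by (simp add: field_simps)
  qed
  have "R_link i1 i2 (1, 1) x"
    unfolding R_link_def
    apply (rule exI[of _ g1], rule exI[of _ h1], rule exI[of _ g2], rule exI[of _ h2])
    using v0 v1 norm_eq ic1 ic2 y1(1) y2(1) sy1 sy2 X1 X2 xx(1) by simp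
  then show "R_equiv i1 i2 (1, 1) x" unfolding R_equiv_def by (intro r_into_rtranclp) simp
qed


end
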